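(* Assume $\mathcal R_0>1$ and let $k$ satisfy $$\frac{\beta_E\nu\nu_E-(\nu_E+\delta_E)\delta_F}{\beta_E\nu\nu_E-(1-\gamma_s)(\nu_E+\delta_E)\delta_F}\,\delta_s<k<\delta_s.$$ Then $\mathcal M:=\mathcal M(\overline\kappa)$ is positively invariant and $\mathbf 0$ is globally asymptotically stable in $\mathcal M$ (in the Filippov sense) for the closed-loop system $$\dot E=\beta_E F\Big(1-\frac EK\Big)-(\nu_E+\delta_E)E,\quad \dot M=(1-\nu)\nu_E E-\delta_M M,\quad \dot F=\nu\nu_E E\frac{M}{M+\gamma_sM_s}-\delta_F F,\quad \dot M_s=k(M+M_s)-\delta_sM_s.$$
   Context: Parameters: $\beta_E,\nu_E,\delta_E,\delta_M,\delta_F,\delta_s,K>0$, $\nu\in(0,1)$, $\gamma_s\in(0,1]$, $\delta_s\ge\delta_M$. $\mathcal R_0:=\dfrac{\beta_E\nu\nu_E}{\delta_F(\nu_E+\delta_E)}$. $\mathcal D'=[0,+\infty)^4$, $z=(E,M,F,M_s)^T$. $\overline\kappa:=\dfrac{\gamma_s\delta_F(\nu_E+\delta_E)}{\beta_E\nu\nu_E-\delta_F(\nu_E+\delta_E)}$. $\mathcal T_1=\{z\in\mathcal D':\beta_EF(1-E/K)\le(\nu_E+\delta_E)E\}$, $\mathcal T_2(\kappa)=\{z\in\mathcal D':M\le\kappa M_s\}$, $\mathcal T_3=\{z\in\mathcal D':(1-\nu)\nu_EE\le\delta_MM\}$, $\mathcal M(\kappa)=\mathcal T_1\cap\mathcal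 T_2(\kappa)\cap\mathcal T_3$. Filippov solutions: locally Lipschitz $z:I\to\mathcal D'$ with $\dot z(t)\in\bigcap_{\varepsilon>0}\bigcap_{N}\overline{\mathrm{conv}}\,X\big(((z(t)+\varepsilon B)\cap\mathcal D')\setminus N\big)$ for a.e. $t$ ($X$ the closed-loop right-hand side, $B$ unit ball of $\mathbb R^4$, $N$ Lebesgue-null). Globally asymptotically stable in $\mathcal S$: for every $\varepsilon>0$ there is $\delta>0$ such that every Filippov solution with $z(0)\in\mathcal S$, $\|z(0)\|<\delta$ satisfies $\|z(t)\|<\varepsilon$ for all $t>0$, and every Filippov solution with $z(0)\in\mathcal S$ tends to $\mathbf 0$. *)

theory Defs
  imports "HOL-Analysis.Analysis"
begin

text \<open>State vector z = (E, M, F, M_s) as z$1, z$2, z$3, z$4.\<close>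

definition Dprime :: "(real^4) set" where
  "Dprime = {z. \<forall>i. 0 \<le> z $ i}"

definition closed_loop ::
  "real \<Rightarrow> real \<Rightarrow> real \<Rightarrow> real \<Rightarrow> real \<Rightarrow> real \<Rightarrow> real \<Rightarrow> real \<Rightarrow> real \<Rightarrow> real
   \<Rightarrow> real^4 \<Rightarrow> real^4" where
  "closed_loop \<beta>E \<nu>E \<delta>E \<delta>M \<delta>F \<delta>s K \<nu> \<gamma>s k z =
     (let E = z $ 1; M = z $ 2; F = z $ 3; Ms = z $ 4 in
      vector [\<beta>E * F * (1 - E / K) - (\<nu>E + \<delta>E) * E,
              (1 - \<nu>) * \<nu>E * E - \<delta>M * M,
              \<nu> * \<nu>E * E * (M / (M + \<gamma>s * Ms)) - \<delta>F * F,
              k * (M + Ms) - \<delta>s * Ms])"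

definition R0 :: "real \<Rightarrow> real \<Rightarrow> real \<Rightarrow> real \<Rightarrow> real \<Rightarrow> real" where
  "R0 \<beta>E \<nu>E \<delta>E \<delta>F \<nu> = (\<beta>E * \<nu> * \<nu>E) / (\<delta>F * (\<nu>E + \<delta>E))"

definition kappa_bar :: "real \<Rightarrow> real \<Rightarrow> real \<Rightarrow> real \<Rightarrow> real \<Rightarrow> real \<Rightarrow> real" where
  "kappa_bar \<beta>E \<nu>E \<delta>E \<delta>F \<nu> \<gamma>s =
     \<gamma>s * \<delta>F * (\<nu>E + \<delta>E) / (\<beta>E * \<nu> * \<nu>E - \<delta>F * (\<nu>E + \<delta>E))"

definition T1 :: "real \<Rightarrow> real \<Rightarrow> real \<Rightarrow> real \<Rightarrow> (real^4) set" where
  "T1 \<beta>E \<nu>E \<delta>E K = {z \<in> Dprime. \<beta>E * z$3 * (1 - z$1 / K) \<le> (\<nu>E + \<delta>E) * z$1}"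

definition T2 :: "real \<Rightarrow> (real^4) set" where
  "T2 \<kappa> = {z \<in> Dprime. z$2 \<le> \<kappa> * z$4}"

definition T3 :: "real \<Rightarrow> real \<Rightarrow> real \<Rightarrow> (real^4) set" where
  "T3 \<nu> \<nu>E \<delta>M = {z \<in> Dprime. (1 - \<nu>) * \<nu>E * z$1 \<le> \<delta>M * z$2}"

definition Mset :: "real \<Rightarrow> real \<Rightarrow> real \<Rightarrow> real \<Rightarrow> real \<Rightarrow> real \<Rightarrow> real \<Rightarrow> (real^4) set" where
  "Mset \<beta>E \<nu>E \<delta>E \<delta>M K \<nu> \<kappa> = T1 \<beta>E \<nu>E \<delta>E K \<inter> T2 \<kappa> \<inter> T3 \<nu> \<nu>E \<delta>M"

definition filippov_set :: "(real^4 \<Rightarrow> real^4) \<Rightarrow> (real^4) set \<Rightarrow> real^4 \<Rightarrow> (real^4) set" where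
  "filippov_set X D z =
     (\<Inter>\<epsilon>\<in>{0<..}. \<Inter>N\<in>null_sets lebesgue.
        closure (convex hull (X ` ((cball z \<epsilon> \<inter> D) - N))))"

definition filippov_solution ::
  "(real^4 \<Rightarrow> real^4) \<Rightarrow> (real^4) set \<Rightarrow> (real \<Rightarrow> real^4) \<Rightarrow> real set \<Rightarrow> bool" where
  "filippov_solution X D z I \<longleftrightarrow>
     is_interval I \<and> z ` I \<subseteq> D \<and>
     (\<forall>t\<in>I. \<exists>\<delta>>0. \<exists>L. L-lipschitz_on (cball t \<delta> \<inter> I) z) \<and>
     (\<exists>N\<in>null_sets lebesgue. \<forall>t\<in>I - N. \<exists>v.
        (z has_vector_derivative v) (at t within I) \<and> v \<in> filippov_set X D (z t))"

end

theory Submission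
  imports Defs
begin

definition plc :: "(real \<Rightarrow> real) \<Rightarrow> real set \<Rightarrow> real \<Rightarrow> bool" where
  "plc f S x \<longleftrightarrow> (\<exists>T B. open T \<and> x \<in> T \<and> (\<forall>y\<in>S\<inter>T. \<bar>f y - f x\<bar> \<le> B * \<bar>y - x\<bar>))"

lemma plc_mono: "plc f S x \<Longrightarrow> S' \<subseteq> S \<Longrightarrow> plc f S' x"
  unfolding plc_def by blast

lemma plc_const: "plc (\<lambda>_. c) S x"
  unfolding plc_def by (rule exI[of _ UNIV], rule exI[of _ 0]) auto

lemma plc_id: "plc (\<lambda>y. y) S x"
  unfolding plc_def by (rule exI[of _ UNIV], rule exI[of _ 1]) auto

lemma plc_add: assumes "plc f S x" "plc g S x" shows "plc (\<lambda>y. f y + g y) S x"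
proof -
  obtain T1 B1 where 1: "open T1" "x \<in> T1" "\<forall>y\<in>S\<inter>T1. \<bar>f y - f x\<bar> \<le> B1 * \<bar>y - x\<bar>"
    using assms(1) unfolding plc_def by blast
  obtain T2 B2 where 2: "open T2" "x \<in> T2" "\<forall>y\<in>S\<inter>T2. \<bar>g y - g x\<bar> \<le> B2 * \<bar>y - x\<bar>"
    using assms(2) unfolding plc_def by blast
  show ?thesis unfolding plc_def
  proof (intro exI conjI ballI)
    show "open (T1 \<inter> T2)" "x \<in> T1 \<inter> T2" using 1 2 by auto
    fix y assume y: "y \<in> S \<inter> (T1 \<inter> T2)"
    have "\<bar>f y - f x\<bar> \<le> B1 * \<bar>y - x\<bar>" "\<bar>g y - g x\<bar> \<le> B2 * \<bar>y - x\<bar>" using 1 2 y by auto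
    then show "\<bar>f y + g y - (f x + g x)\<bar> \<le> (B1 + B2) * \<bar>y - x\<bar>" by (simp add: algebra_simps)
  qed
qed

lemma plc_neg: assumes "plc f S x" shows "plc (\<lambda>y. - f y) S x"
  using assms unfolding plc_def by (simp add: abs_minus_commute)

lemma plc_diff: assumes "plc f S x" "plc g S x" shows "plc (\<lambda>y. f y - g y) S x"
  using plc_add[OF assms(1) plc_neg[OF assms(2)]] by simp

lemma plc_negpart: assumes "plc f S x" shows "plc (\<lambda>y. max 0 (- f y)) S x"
proof -
  obtain T B where 1: "open T" "x \<in> T" "\<forall>y\<in>S\<inter>T. \<bar>f y - f x\<bar> \<le> B * \<bar>y - x\<bar>"
    using assms unfolding plc_def by blast
  show ?thesis unfolding plc_def
  proof (intro exI conjI ballI)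
    fix y assume y: "y \<in> S \<inter> T"
    have "\<bar>max 0 (- f y) - max 0 (- f x)\<bar> \<le> \<bar>f y - f x\<bar>" by (cases "f y \<le> 0"; cases "f x \<le> 0") (auto simp: max_def abs_if)
    moreover have "\<bar>f y - f x\<bar> \<le> B * \<bar>y - x\<bar>" using 1 y by blast
    ultimately show "\<bar>max 0 (- f y) - max 0 (- f x)\<bar> \<le> B * \<bar>y - x\<bar>" by linarith
  qed (use 1 in auto)
qed

lemma plc_mult: assumes "plc f S x" "plc g S x" shows "plc (\<lambda>y. f y * g y) S x"
proof -
  obtain T1 B1 where 1: "open T1" "x \<in> T1" "\<forall>y\<in>S\<inter>T1. \<bar>f y - f x\<bar> \<le> B1 * \<bar>y - x\<bar>"
    using assms(1) unfolding plc_def by blast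
  obtain T2 B2 where 2: "open T2" "x \<in> T2" "\<forall>y\<in>S\<inter>T2. \<bar>g y - g x\<bar> \<le> B2 * \<bar>y - x\<bar>"
    using assms(2) unfolding plc_def by blast
  show ?thesis unfolding plc_def
  proof (intro exI conjI ballI)
    show "open (T1 \<inter> T2 \<inter> ball x 1)" "x \<in> T1 \<inter> T2 \<inter> ball x 1" using 1 2 by auto
    fix y assume y: "y \<in> S \<inter> (T1 \<inter> T2 \<inter> ball x 1)"
    have a: "\<bar>f y - f x\<bar> \<le> B1 * \<bar>y - x\<bar>" and b: "\<bar>g y - g x\<bar> \<le> B2 * \<bar>y - x\<bar>" using 1 2 y by auto
    have yx: "\<bar>y - x\<bar> \<le> 1" using y by (auto simp: dist_real_def)
    have B1: "B1 * \<bar>y - x\<bar> \<le> \<bar>B1\<bar>"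
    proof -
      have "B1 * \<bar>y - x\<bar> \<le> \<bar>B1\<bar> * \<bar>y - x\<bar>" by (rule mult_right_mono) auto
      also have "\<dots> \<le> \<bar>B1\<bar> * 1" using yx by (rule mult_left_mono) auto
      finally show ?thesis by simp
    qed
    have fy: "\<bar>f y\<bar> \<le> \<bar>f x\<bar> + \<bar>B1\<bar>" using a B1 by linarith
    have "\<bar>f y * g y - f x * g x\<bar> = \<bar>f y * (g y - g x) + g x * (f y - f x)\<bar>" by (simp add: algebra_simps)
    also have "\<dots> \<le> \<bar>f y\<bar> * \<bar>g y - g x\<bar> + \<bar>g x\<bar> * \<bar>f y - f x\<bar>" by (metis abs_mult abs_triangle_ineq)
    also have "\<dots> \<le> (\<bar>f x\<bar> + \<bar>B1\<bar>) * (\<bar>B2\<bar> * \<bar>y - x\<bar>) + \<bar>g x\<bar> * (\<bar>B1\<bar> * \<bar>y - x\<bar>)"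
    proof (rule add_mono)
      have b': "\<bar>g y - g x\<bar> \<le> \<bar>B2\<bar> * \<bar>y - x\<bar>"
        using b mult_right_mono[OF abs_ge_self[of B2], of "\<bar>y - x\<bar>"] by linarith
      have a': "\<bar>f y - f x\<bar> \<le> \<bar>B1\<bar> * \<bar>y - x\<bar>"
        using a mult_right_mono[OF abs_ge_self[of B1], of "\<bar>y - x\<bar>"] by linarith
      show "\<bar>f y\<bar> * \<bar>g y - g x\<bar> \<le> (\<bar>f x\<bar> + \<bar>B1\<bar>) * (\<bar>B2\<bar> * \<bar>y - x\<bar>)"
        by (rule mult_mono[OF fy b']) auto
      show "\<bar>g x\<bar> * \<bar>f y - f x\<bar> \<le> \<bar>g x\<bar> * (\<bar>B1\<bar> * \<bar>y - x\<bar>)"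
        by (rule mult_left_mono[OF a']) auto
    qed
    also have "\<dots> = ((\<bar>f x\<bar> + \<bar>B1\<bar>) * \<bar>B2\<bar> + \<bar>g x\<bar> * \<bar>B1\<bar>) * \<bar>y - x\<bar>" by (simp add: algebra_simps)
    finally show "\<bar>f y * g y - f x * g x\<bar> \<le> ((\<bar>f x\<bar> + \<bar>B1\<bar>) * \<bar>B2\<bar> + \<bar>g x\<bar> * \<bar>B1\<bar>) * \<bar>y - x\<bar>" .
  qed
qed

lemma plc_deriv: assumes "(f has_real_derivative d) (at x)" shows "plc f S x"
proof -
  have "((\<lambda>y. (f y - f x) / (y - x)) \<longlongrightarrow> d) (at x)" using assms has_field_derivative_iff by blast
  then have "eventually (\<lambda>y. dist ((f y - f x) / (y - x)) d < 1) (at x)"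
    by (rule tendstoD) simp
  then obtain r where r: "r > 0" "\<And>y. 0 < dist y x \<Longrightarrow> dist y x < r \<Longrightarrow> dist ((f y - f x) / (y - x)) d < 1"
    unfolding eventually_at by auto
  show ?thesis unfolding plc_def
  proof (intro exI conjI ballI)
    show "open (ball x r)" "x \<in> ball x r" using r by auto
    fix y assume y: "y \<in> S \<inter> ball x r"
    show "\<bar>f y - f x\<bar> \<le> (\<bar>d\<bar> + 1) * \<bar>y - x\<bar>"
    proof (cases "y = x")
      case False
      then have "\<bar>(f y - f x) / (y - x) - d\<bar> < 1" using r(2)[of y] y by (auto simp: dist_real_def dist_commute)
      then have "\<bar>(f y - f x) / (y - x)\<bar> \<le> \<bar>d\<bar> + 1" by linarith
      then show ?thesis using False by (simp add: abs_divide divide_le_eq)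
    qed simp
  qed
qed

lemma plc_cont: assumes "\<forall>x\<in>S. plc f S x" shows "continuous_on S f"
  unfolding continuous_on_iff
proof (intro ballI allI impI)
  fix x e assume x: "x \<in> S" and e: "(0::real) < e"
  obtain T B where 1: "open T" "x \<in> T" "\<forall>y\<in>S\<inter>T. \<bar>f y - f x\<bar> \<le> B * \<bar>y - x\<bar>"
    using assms x unfolding plc_def by blast
  obtain r where r: "r > 0" "ball x r \<subseteq> T" using 1 open_contains_ball by blast
  define d where "d = min r (e / (\<bar>B\<bar> + 1))"
  have d: "d > 0" using r e by (simp add: d_def)
  show "\<exists>d>0. \<forall>y\<in>S. dist y x < d \<longrightarrow> dist (f y) (f x) < e"
  proof (intro exI conjI ballI impI)
    fix y assume y: "y \<in> S" "dist y x < d"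
    then have "y \<in> T" using r by (auto simp: d_def dist_commute)
    then have a: "\<bar>f y - f x\<bar> \<le> B * \<bar>y - x\<bar>" using 1 y by auto
    have "B * \<bar>y - x\<bar> \<le> \<bar>B\<bar> * \<bar>y - x\<bar>" by (simp add: mult_right_mono)
    also have "\<dots> \<le> \<bar>B\<bar> * d" using y by (simp add: dist_real_def mult_left_mono)
    also have "\<dots> < e"
    proof -
      have "\<bar>B\<bar> * d \<le> \<bar>B\<bar> * (e / (\<bar>B\<bar> + 1))" by (rule mult_left_mono) (auto simp: d_def)
      also have "\<dots> < e" using e by (simp add: field_simps)
      finally show ?thesis .
    qed
    finally show "dist (f y) (f x) < e" using a by (simp add: dist_real_def)
  qed (use d in auto)
qed



lemma KL:
  fixes f :: "real \<Rightarrow> real"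
  assumes ab: "a \<le> b" and cont: "continuous_on {a..b} f" and N: "negligible N"
    and lip: "\<And>x. x \<in> N \<inter> {a..b} \<Longrightarrow> plc f (N \<inter> {a..b}) x"
    and cond: "\<And>t e. t \<in> {a..<b} - N \<Longrightarrow> e > 0 \<Longrightarrow> \<exists>s\<in>{t<..b}. f s - f t \<le> e * (s - t)"
  shows "f b \<le> f a"
proof (rule ccontr)
  assume "\<not> f b \<le> f a"
  then have fab: "f a < f b" by simp
  then have "a < b" using ab by (cases "a = b") auto
  define e where "e = (f b - f a) / (2 * (b - a))"
  have e: "e > 0" using fab \<open>a < b\<close> by (simp add: e_def)
  define g where "g s = f s - e * (s - a)" for s
  have gab: "g a < g b"
  proof -
    have "e * (b - a) = (f b - f a) / 2" using \<open>a < b\<close> by (simp add: e_def field_simps)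
    then show ?thesis using fab by (simp add: g_def)
  qed
  have gcont: "continuous_on {a..b} g" unfolding g_def by (intro continuous_intros cont)
  let ?S = "N \<inter> {a..b}"
  have "negligible (g ` ?S)"
  proof (rule negligible_locally_Lipschitz_image)
    show "negligible ?S" using N negligible_Int by blast
    fix x assume x: "x \<in> ?S"
    have "plc g ?S x" unfolding g_def
      by (intro plc_diff lip x plc_mult plc_const plc_id)
    then obtain T B where "open T" "x \<in> T" "\<forall>y\<in>?S\<inter>T. \<bar>g y - g x\<bar> \<le> B * \<bar>y - x\<bar>"
      unfolding plc_def by blast
    then show "\<exists>T B. open T \<and> x \<in> T \<and> (\<forall>y\<in>?S \<inter> T. norm (g y - g x) \<le> B * norm (y - x))"
      by (intro exI[of _ T] exI[of _ B]) (simp add: real_norm_def)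
  qed auto
  have "\<not> {g a<..<g b} \<subseteq> g ` ?S"
  proof
    assume "{g a<..<g b} \<subseteq> g ` ?S"
    then have "negligible {g a<..<g b}" using \<open>negligible (g ` ?S)\<close> negligible_subset by blast
    then show False using gab negligible_interval(2)[of "g a" "g b"] by (simp add: box_real)
  qed
  then obtain y where y: "g a < y" "y < g b" "y \<notin> g ` ?S" by (auto simp: subset_eq)
  define S' where "S' = {s \<in> {a..b}. g s \<le> y}"
  have S'eq: "S' = {a..b} \<inter> g -` {..y}" by (auto simp: S'_def)
  have "closed S'" unfolding S'eq
    by (rule continuous_closed_preimage[OF gcont]) auto
  have "a \<in> S'" using y ab by (auto simp: S'_def)
  have bdd: "bdd_above S'" by (auto simp: S'_def bdd_above_def)
  define t where "t = Sup S'"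
  have tS: "t \<in> S'" unfolding t_def using closed_contains_Sup[OF _ bdd \<open>closed S'\<close>] \<open>a \<in> S'\<close> by blast
  have ge: "\<And>s. s \<in> S' \<Longrightarrow> s \<le> t" unfolding t_def using bdd by (simp add: cSup_upper)
  have tab: "a \<le> t" "t \<le> b" using tS by (auto simp: S'_def)
  have gt: "g t \<le> y" using tS by (auto simp: S'_def)
  have tb: "t < b" using gt y tab by (cases "t = b") auto
  have after: "g s > y" if "s \<in> {t<..b}" for s
  proof (rule ccontr)
    assume "\<not> g s > y"
    then have "s \<in> S'" using that tab by (auto simp: S'_def)
    then show False using ge[of s] that by auto
  qed
  have gty: "g t = y"
  proof (rule ccontr)
    assume "g t \<noteq> y"
    then have lt: "g t < y" using gt by simp
    have "continuous (at t within {a..b}) g" using gcont tab by (simp add: continuous_on_eq_continuous_within)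
    then have "eventually (\<lambda>s. g s < y) (at t within {a..b})"
      unfolding continuous_within using lt order_tendstoD(2) by blast
    then obtain d where d: "d > 0" "\<And>s. s \<in> {a..b} \<Longrightarrow> 0 < dist s t \<Longrightarrow> dist s t < d \<Longrightarrow> g s < y"
      unfolding eventually_at by auto
    define s where "s = min b (t + d/2)"
    have "s \<in> {t<..b}" using d tb by (auto simp: s_def)
    moreover have "g s < y" using d tab tb by (intro d(2)) (auto simp: s_def dist_real_def)
    ultimately show False using after by (meson order_less_asym)
  qed
  have "t \<notin> N" using y(3) gty tab by (metis IntI atLeastAtMost_iff image_eqI)
  then have "t \<in> {a..<b} - N" using tab tb by auto
  then obtain s where s: "s \<in> {t<..b}" "f s - f t \<le> e * (s - t)" using cond e by blast
  then have "g s \<le> g t" by (simp add: g_def algebra_simps)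
  then show False using after[OF s(1)] gty by simp
qed

definition RB :: "(real \<Rightarrow> real) \<Rightarrow> real \<Rightarrow> real set \<Rightarrow> real \<Rightarrow> bool" where
  "RB \<phi> t S d \<longleftrightarrow> (\<forall>e>0. eventually (\<lambda>s. \<phi> s - \<phi> t \<le> (d + e) * (s - t)) (at t within S))"

lemma GL:
  fixes f :: "real \<Rightarrow> real" and I :: "real set"
  assumes I: "is_interval I" "0 \<in> I" "I \<subseteq> {0..}" and lip: "\<forall>x\<in>I. plc f I x"
    and nn: "\<forall>t\<in>I. f t \<ge> 0" and N: "negligible N"
    and cond: "\<forall>t\<in>I - N. RB f t (I \<inter> {t<..}) (C * f t)"
  shows "\<forall>t\<in>I. f t \<le> f 0 * exp (C * t)"
proof
  fix t assume tI: "t \<in> I"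
  then have t0: "t \<ge> 0" using I by auto
  have sub: "{0..t} \<subseteq> I"
  proof
    fix y assume "y \<in> {0..t}"
    then show "y \<in> I" using mem_is_interval_1_I[OF I(1) I(2) tI] by auto
  qed
  define g where "g s = exp (- C * s) * f s" for s
  have fcont: "continuous_on I f" using plc_cont lip by blast
  have "g t \<le> g 0"
  proof (rule KL[OF t0 _ N])
    have fc: "continuous_on {0..t} f" using continuous_on_subset[OF fcont sub] .
    show "continuous_on {0..t} g" unfolding g_def
      by (intro continuous_intros fc)
    fix x assume x: "x \<in> N \<inter> {0..t}"
    have "plc (\<lambda>s. exp (- C * s)) (N \<inter> {0..t}) x"
    proof (rule plc_deriv)
      show "((\<lambda>s. exp (- C * s)) has_real_derivative exp (- C * x) * (- C)) (at x)"
        by (auto intro!: derivative_eq_intros)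
    qed
    moreover have "plc f (N \<inter> {0..t}) x"
    proof -
      have xI: "x \<in> I" using x sub by blast
      have "plc f I x" using lip xI by blast
      moreover have "N \<inter> {0..t} \<subseteq> I" using sub by blast
      ultimately show ?thesis by (rule plc_mono)
    qed
    ultimately show "plc g (N \<inter> {0..t}) x" unfolding g_def by (rule plc_mult)
  next
    fix \<tau> e assume \<tau>: "\<tau> \<in> {0..<t} - N" and e: "(e::real) > 0"
    define e' where "e' = e * exp (- \<bar>C\<bar> * t)"
    have e': "e' > 0" using e by (simp add: e'_def)
    have "\<tau> \<in> I - N" using \<tau> sub by auto
    then have "eventually (\<lambda>s. f s - f \<tau> \<le> (C * f \<tau> + e') * (s - \<tau>)) (at \<tau> within I \<inter> {\<tau><..})"
      using cond e' unfolding RB_def by blast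
    then obtain d where d: "d > 0" "\<And>s. s \<in> I \<inter> {\<tau><..} \<Longrightarrow> 0 < dist s \<tau> \<Longrightarrow> dist s \<tau> < d
        \<Longrightarrow> f s - f \<tau> \<le> (C * f \<tau> + e') * (s - \<tau>)"
      unfolding eventually_at by auto
    define s where "s = min t (\<tau> + d/2)"
    have s: "s \<in> {\<tau><..t}" using d \<tau> by (auto simp: s_def)
    have sI: "s \<in> I" using s sub \<tau> by auto
    have fs: "f s - f \<tau> \<le> (C * f \<tau> + e') * (s - \<tau>)"
      using d s sI by (intro d(2)) (auto simp: s_def dist_real_def)
    have ftau: "f \<tau> \<ge> 0" using nn \<open>\<tau> \<in> I - N\<close> by auto
    have ex: "exp (- C * s) * (1 + C * (s - \<tau>)) \<le> exp (- C * \<tau>)"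
    proof -
      have "exp (- C * s) = exp (- C * \<tau>) * exp (- (C * (s - \<tau>)))"
        by (simp add: exp_add[symmetric] algebra_simps)
      moreover have "exp (- (C * (s - \<tau>))) * (1 + C * (s - \<tau>)) \<le> 1"
      proof -
        have "1 + C * (s - \<tau>) \<le> exp (C * (s - \<tau>))" by (rule exp_ge_add_one_self)
        then have "exp (- (C * (s - \<tau>))) * (1 + C * (s - \<tau>)) \<le> exp (- (C * (s - \<tau>))) * exp (C * (s - \<tau>))"
          by (intro mult_left_mono) auto
        moreover have "exp (- (C * (s - \<tau>))) * exp (C * (s - \<tau>)) = 1"
          using exp_add[of "- (C * (s - \<tau>))" "C * (s - \<tau>)"] by simp
        ultimately show ?thesis by simp
      qed
      ultimately have "exp (- C * s) * (1 + C * (s - \<tau>)) = exp (- C * \<tau>) * (exp (- (C * (s - \<tau>))) * (1 + C * (s - \<tau>)))"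
        by simp
      also have "\<dots> \<le> exp (- C * \<tau>) * 1"
        by (rule mult_left_mono) (use \<open>exp (- (C * (s - \<tau>))) * (1 + C * (s - \<tau>)) \<le> 1\<close> in auto)
      finally show ?thesis by simp
    qed
    have ex2: "exp (- C * s) * e' \<le> e"
    proof -
      have "- C * s - \<bar>C\<bar> * t \<le> 0"
      proof -
        have "- C * s \<le> \<bar>C\<bar> * s" using mult_right_mono[OF abs_ge_minus_self[of C], of s] s \<tau> by auto
        also have "\<dots> \<le> \<bar>C\<bar> * t" using s by (intro mult_left_mono) auto
        finally show ?thesis by simp
      qed
      then have "exp (- C * s) * exp (- \<bar>C\<bar> * t) \<le> 1" by (simp add: exp_add[symmetric])
      then show ?thesis unfolding e'_def using e by (simp add: mult.left_commute)
    qed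
    have "g s - g \<tau> = exp (- C * s) * f s - exp (- C * \<tau>) * f \<tau>" by (simp add: g_def)
    also have "\<dots> \<le> exp (- C * s) * (f \<tau> + (C * f \<tau> + e') * (s - \<tau>)) - exp (- C * \<tau>) * f \<tau>"
      using fs by (intro diff_right_mono mult_left_mono) auto
    also have "\<dots> = f \<tau> * (exp (- C * s) * (1 + C * (s - \<tau>)) - exp (- C * \<tau>)) + (exp (- C * s) * e') * (s - \<tau>)"
      by (simp add: algebra_simps)
    also have "\<dots> \<le> 0 + e * (s - \<tau>)"
    proof (rule add_mono)
      show "f \<tau> * (exp (- C * s) * (1 + C * (s - \<tau>)) - exp (- C * \<tau>)) \<le> 0"
        using ftau ex by (simp add: mult_nonneg_nonpos)
      show "exp (- C * s) * e' * (s - \<tau>) \<le> e * (s - \<tau>)" using ex2 s by (intro mult_right_mono) auto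
    qed
    finally show "\<exists>s\<in>{\<tau><..t}. g s - g \<tau> \<le> e * (s - \<tau>)" using s by auto
  qed
  then have "exp (- C * t) * f t \<le> f 0" by (simp add: g_def)
  then have "exp (C * t) * (exp (- C * t) * f t) \<le> exp (C * t) * f 0" by (simp add: mult_left_mono)
  then show "f t \<le> f 0 * exp (C * t)" by (simp add: exp_minus field_simps)
qed



lemma ev_mem: "eventually (\<lambda>y. y \<in> S) (at t within S)"
  unfolding eventually_at_filter by simp

lemma RB_deriv:
  assumes der: "(\<phi> has_real_derivative d) (at t within S)" and S: "S \<subseteq> {t<..}"
  shows "RB \<phi> t S d"
  unfolding RB_def
proof (intro allI impI)
  fix e :: real assume e: "e > 0"
  have "((\<lambda>y. (\<phi> y - \<phi> t) / (y - t)) \<longlongrightarrow> d) (at t within S)"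
    using der has_field_derivative_iff by blast
  then have "eventually (\<lambda>y. dist ((\<phi> y - \<phi> t) / (y - t)) d < e) (at t within S)"
    using e by (rule tendstoD)
  then show "eventually (\<lambda>s. \<phi> s - \<phi> t \<le> (d + e) * (s - t)) (at t within S)"
    using ev_mem[of S t]
  proof (eventually_elim)
    case (elim y)
    then have yt: "y - t > 0" using S by auto
    have "(\<phi> y - \<phi> t) / (y - t) < d + e" using elim(1) by (auto simp: dist_real_def)
    then show ?case using yt by (simp add: divide_less_eq less_imp_le)
  qed
qed

lemma RB_add:
  assumes "RB \<phi> t S d1" "RB \<psi> t S d2"
  shows "RB (\<lambda>s. \<phi> s + \<psi> s) t S (d1 + d2)"
  unfolding RB_def
proof (intro allI impI)
  fix e :: real assume e: "e > 0"
  have "eventually (\<lambda>s. \<phi> s - \<phi> t \<le> (d1 + e/2) * (s - t)) (at t within S)"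
    using assms(1) e unfolding RB_def by simp
  moreover have "eventually (\<lambda>s. \<psi> s - \<psi> t \<le> (d2 + e/2) * (s - t)) (at t within S)"
    using assms(2) e unfolding RB_def by simp
  ultimately show "eventually (\<lambda>s. \<phi> s + \<psi> s - (\<phi> t + \<psi> t) \<le> (d1 + d2 + e) * (s - t)) (at t within S)"
  proof (eventually_elim)
    case (elim s)
    have "(d1 + e/2)*(s-t) + (d2+e/2)*(s-t) = (d1+d2+e)*(s-t)" by (simp add: algebra_simps)
    then show ?case using elim by linarith
  qed
qed

lemma RB_cmult:
  assumes "RB \<phi> t S d" "c \<ge> 0" "S \<subseteq> {t<..}"
  shows "RB (\<lambda>s. c * \<phi> s) t S (c * d)"
  unfolding RB_def
proof (intro allI impI)
  fix e :: real assume e: "e > 0"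
  show "eventually (\<lambda>s. c * \<phi> s - c * \<phi> t \<le> (c * d + e) * (s - t)) (at t within S)"
  proof (cases "c = 0")
    case True
    show ?thesis using ev_mem[of S t]
    proof (eventually_elim)
      case (elim s) then show ?case using True e assms(3) by auto
    qed
  next
    case False
    then have c: "c > 0" using assms(2) by simp
    have "eventually (\<lambda>s. \<phi> s - \<phi> t \<le> (d + e / c) * (s - t)) (at t within S)"
      using assms(1) e c unfolding RB_def by simp
    then show ?thesis using ev_mem[of S t]
    proof (eventually_elim)
      case (elim s)
      have "c * (\<phi> s - \<phi> t) \<le> c * ((d + e / c) * (s - t))" using elim(1) c by (intro mult_left_mono) auto
      moreover have "c * ((d + e / c) * (s - t)) = (c * d + e) * (s - t)" using c by (simp add: field_simps)
      ultimately show ?case by (simp add: algebra_simps)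
    qed
  qed
qed

lemma RB_mono:
  assumes "RB \<phi> t S d" "d \<le> d'" "S \<subseteq> {t<..}"
  shows "RB \<phi> t S d'"
  unfolding RB_def
proof (intro allI impI)
  fix e :: real assume e: "e > 0"
  have "eventually (\<lambda>s. \<phi> s - \<phi> t \<le> (d + e) * (s - t)) (at t within S)"
    using assms(1) e unfolding RB_def by simp
  then show "eventually (\<lambda>s. \<phi> s - \<phi> t \<le> (d' + e) * (s - t)) (at t within S)"
    using ev_mem[of S t]
  proof (eventually_elim)
    case (elim s)
    then have "(d + e) * (s - t) \<le> (d' + e) * (s - t)" using assms(2,3) by (intro mult_right_mono) auto
    then show ?case using elim by linarith
  qed
qed

lemma RB_pospart:
  assumes rb: "RB \<psi> t S d" and cont: "continuous (at t within S) \<psi>" and S: "S \<subseteq> {t<..}"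
  shows "RB (\<lambda>s. max 0 (\<psi> s)) t S (if \<psi> t > 0 then d else if \<psi> t = 0 then max 0 d else 0)"
  unfolding RB_def
proof (intro allI impI)
  fix e :: real assume e: "e > 0"
  have ev: "eventually (\<lambda>s. \<psi> s - \<psi> t \<le> (d + e) * (s - t)) (at t within S)"
    using rb e unfolding RB_def by simp
  have lim: "(\<psi> \<longlongrightarrow> \<psi> t) (at t within S)" using cont continuous_within by blast
  consider "\<psi> t > 0" | "\<psi> t = 0" | "\<psi> t < 0" by linarith
  then show "eventually (\<lambda>s. max 0 (\<psi> s) - max 0 (\<psi> t) \<le>
      ((if \<psi> t > 0 then d else if \<psi> t = 0 then max 0 d else 0) + e) * (s - t)) (at t within S)"
  proof cases
    case 1
    have "eventually (\<lambda>s. \<psi> s > 0) (at t within S)" using order_tendstoD(1)[OF lim 1] .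
    with ev show ?thesis
    proof (eventually_elim)
      case (elim s) then show ?case using 1 by simp
    qed
  next
    case 2
    show ?thesis using ev ev_mem[of S t]
    proof (eventually_elim)
      case (elim s)
      then have st: "s - t > 0" using S by auto
      have "(d + e) * (s - t) \<le> (max 0 d + e) * (s - t)" using st by (intro mult_right_mono) auto
      moreover have "0 \<le> (max 0 d + e) * (s - t)" using st e by auto
      ultimately show ?case using elim 2 by auto
    qed
  next
    case 3
    have "eventually (\<lambda>s. \<psi> s < 0) (at t within S)" using order_tendstoD(2)[OF lim 3] .
    with ev_mem[of S t] show ?thesis
    proof (eventually_elim)
      case (elim s) then show ?case using 3 e S by auto
    qed
  qed
qed

lemma pospart_le:
  assumes "\<psi>t \<ge> 0 \<longrightarrow> d \<le> T" "\<psi>t \<le> 0 \<longrightarrow> 0 \<le> T"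
  shows "(if (\<psi>t::real) > 0 then d else if \<psi>t = 0 then max 0 d else (0::real)) \<le> T"
  using assms by (cases "\<psi>t > 0"; cases "\<psi>t = 0") auto

lemma vector4:
  "(vector [a,b,c,d] :: ('x::zero)^4) $ 1 = a"
  "(vector [a,b,c,d] :: ('x::zero)^4) $ 2 = b"
  "(vector [a,b,c,d] :: ('x::zero)^4) $ 3 = c"
  "(vector [a,b,c,d] :: ('x::zero)^4) $ 4 = d"
  unfolding vector_def by simp_all

lemma filippov_le:
  fixes X :: "real^4 \<Rightarrow> real^4" and \<psi> :: "real^4 \<Rightarrow> real"
  assumes v: "v \<in> filippov_set X D z" and cont: "continuous (at z within D) \<psi>"
    and bnd: "\<And>w. w \<in> D \<Longrightarrow> c * X w $ i \<le> \<psi> w"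
  shows "c * v $ i \<le> \<psi> z"
proof (rule field_le_epsilon)
  fix \<eta> :: real assume \<eta>: "\<eta> > 0"
  have "eventually (\<lambda>w. dist (\<psi> w) (\<psi> z) < \<eta>) (at z within D)"
    using cont \<eta> unfolding continuous_within by (rule tendstoD)
  then obtain r where r: "r > 0" "\<And>w. w \<in> D \<Longrightarrow> 0 < dist w z \<Longrightarrow> dist w z < r \<Longrightarrow> dist (\<psi> w) (\<psi> z) < \<eta>"
    unfolding eventually_at by auto
  define H where "H = {u::real^4. c * u $ i \<le> \<psi> z + \<eta>}"
  have "v \<in> closure (convex hull (X ` ((cball z (r/2) \<inter> D) - {})))"
  proof -
    have "r/2 \<in> {0<..}" "{} \<in> null_sets lebesgue" using r by auto
    then show ?thesis using v unfolding filippov_set_def by blast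
  qed
  moreover have "closure (convex hull (X ` ((cball z (r/2) \<inter> D) - {}))) \<subseteq> H"
  proof (rule closure_minimal)
    show "closed H" unfolding H_def
      by (rule closed_Collect_le) (intro continuous_intros)+
    show "convex hull (X ` (cball z (r / 2) \<inter> D - {})) \<subseteq> H"
    proof (rule hull_minimal)
      show "X ` (cball z (r / 2) \<inter> D - {}) \<subseteq> H"
      proof
        fix u assume "u \<in> X ` (cball z (r / 2) \<inter> D - {})"
        then obtain w where w: "w \<in> D" "dist z w \<le> r/2" "u = X w" by auto
        have "\<psi> w \<le> \<psi> z + \<eta>"
        proof (cases "w = z")
          case True then show ?thesis using \<eta> by simp
        next
          case False
          then have "dist (\<psi> w) (\<psi> z) < \<eta>" using r w by (intro r(2)) (auto simp: dist_commute)
          then show ?thesis by (simp add: dist_real_def)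
        qed
        then show "u \<in> H" using bnd[OF w(1)] w(3) by (simp add: H_def)
      qed
      show "convex H" unfolding H_def convex_def
      proof (intro ballI allI impI)
        fix x y :: "real^4" and a b :: real
        assume xy: "x \<in> {u. c * u $ i \<le> \<psi> z + \<eta>}" "y \<in> {u. c * u $ i \<le> \<psi> z + \<eta>}"
          and ab: "0 \<le> a" "0 \<le> b" "a + b = 1"
        have "c * (a *\<^sub>R x + b *\<^sub>R y) $ i = a * (c * x $ i) + b * (c * y $ i)" by (simp add: algebra_simps)
        also have "\<dots> \<le> a * (\<psi> z + \<eta>) + b * (\<psi> z + \<eta>)"
          using xy ab by (intro add_mono mult_left_mono) auto
        also have "\<dots> = (a + b) * (\<psi> z + \<eta>)" by (simp add: algebra_simps)
        also have "\<dots> = \<psi> z + \<eta>" using ab by simp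
        finally show "a *\<^sub>R x + b *\<^sub>R y \<in> {u. c * u $ i \<le> \<psi> z + \<eta>}" by simp
      qed
    qed
  qed
  ultimately show "c * v $ i \<le> \<psi> z + \<eta>" by (auto simp: H_def)
qed



lemma plc_divc: "plc f S x \<Longrightarrow> plc (\<lambda>y. f y / c) S x"
  using plc_mult[OF _ plc_const, of f S x "1/c"] by simp

lemma plc_comp:
  assumes "\<forall>t\<in>I. \<exists>\<delta>>0. \<exists>L. L-lipschitz_on (cball t \<delta> \<inter> I) z" "t \<in> I"
  shows "plc (\<lambda>s. (z s :: real^'n) $ i) I t"
proof -
  obtain \<delta> L where d: "\<delta> > 0" "L-lipschitz_on (cball t \<delta> \<inter> I) z" using assms by blast
  show ?thesis unfolding plc_def
  proof (intro exI conjI ballI)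
    show "open (ball t \<delta>)" "t \<in> ball t \<delta>" using d by auto
    fix y assume y: "y \<in> I \<inter> ball t \<delta>"
    have "dist (z y) (z t) \<le> L * dist y t"
      by (rule lipschitz_onD[OF d(2)]) (use y d assms(2) in auto)
    moreover have "\<bar>z y $ i - z t $ i\<bar> \<le> dist (z y) (z t)"
      using component_le_norm_cart[of "z y - z t" i] by (simp add: dist_norm)
    ultimately show "\<bar>z y $ i - z t $ i\<bar> \<le> L * \<bar>y - t\<bar>" by (simp add: dist_real_def)
  qed
qed

lemma comp_deriv:
  "(z has_vector_derivative v) F \<Longrightarrow> ((\<lambda>s. (z s :: real^'n) $ i) has_real_derivative v $ i) F"
  using bounded_linear.has_vector_derivative[OF bounded_linear_vec_nth, of z v F i]
  by (simp add: has_real_derivative_iff_has_vector_derivative)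

lemma cont_vec_nth_within: "continuous (at w within S) (\<lambda>u::real^'n. u $ i)"
  by (rule continuous_at_imp_continuous_within, rule isCont_vec_nth, rule continuous_ident)

lemma Dprime_nn: "w \<in> Dprime \<Longrightarrow> w $ i \<ge> 0"
  by (simp add: Dprime_def)

locale sys =
  fixes bE nE dE dM dF ds K nu gs k :: real
  assumes pos: "bE > 0" "nE > 0" "dE > 0" "dM > 0" "dF > 0" "ds > 0" "K > 0"
    and nu: "0 < nu" "nu < 1"
    and gam: "0 < gs" "gs \<le> 1"
    and dsM: "ds \<ge> dM"
    and R0: "R0 bE nE dE dF nu > 1"
    and k_lo: "(bE * nu * nE - (nE + dE) * dF)
                / (bE * nu * nE - (1 - gs) * (nE + dE) * dF) * ds < k"
    and k_hi: "k < ds"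
begin

definition "A = nE + dE"
definition "P = bE * nu * nE - dF * A"
definition "kap = kappa_bar bE nE dE dF nu gs"
definition "X = closed_loop bE nE dE dM dF ds K nu gs k"
definition "MM = Mset bE nE dE dM K nu kap"
definition "g1 w = A * w $ 1 - bE * w $ 3 * (1 - w $ 1 / K)" for w :: "real^4"
definition "g2 w = kap * w $ 4 - w $ 2" for w :: "real^4"
definition "g3 w = dM * w $ 2 - (1 - nu) * nE * w $ 1" for w :: "real^4"
definition "hh w = (if w $ 2 + gs * w $ 4 = 0 then 1 else w $ 2 / (w $ 2 + gs * w $ 4))" for w :: "real^4"

lemma A_pos: "A > 0" using pos by (simp add: A_def)

lemma P_pos: "P > 0"
proof -
  have "dF * A > 0" using pos A_pos by simp
  moreover have "bE * nu * nE / (dF * A) > 1" using R0 by (simp add: R0_def A_def)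
  ultimately have "bE * nu * nE > dF * A" by (simp add: divide_less_eq less_divide_eq)
  then show ?thesis by (simp add: P_def)
qed

lemma kap_eq: "kap = gs * dF * A / P"
  by (simp add: kap_def kappa_bar_def P_def A_def)

lemma kap_pos: "kap > 0"
  using gam pos A_pos P_pos by (simp add: kap_eq)

lemma kapP: "kap * P = gs * dF * A"
  using P_pos by (simp add: kap_eq)

lemma k_kap: "k * (1 + kap) > ds"
proof -
  have den: "bE * nu * nE - (1 - gs) * (nE + dE) * dF = P + gs * dF * A"
    by (simp add: P_def A_def algebra_simps)
  have num: "bE * nu * nE - (nE + dE) * dF = P" by (simp add: P_def A_def algebra_simps)
  have dpos: "P + gs * dF * A > 0" using P_pos gam pos A_pos by (simp add: add_pos_pos)
  have "P / (P + gs * dF * A) * ds < k" using k_lo den num by simp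
  then have "P * ds < k * (P + gs * dF * A)" using dpos by (simp add: field_simps)
  also have "\<dots> = k * P * (1 + kap)" using kapP by (simp add: algebra_simps)
  finally have "P * ds < P * (k * (1 + kap))" by (simp add: algebra_simps)
  then show ?thesis using P_pos by simp
qed

lemma k_pos: "k > 0"
proof -
  have "k * (1 + kap) > 0" using k_kap pos by linarith
  then show ?thesis using kap_pos by (simp add: zero_less_mult_iff)
qed

lemma X_comp:
  "X w $ 1 = bE * w $ 3 * (1 - w $ 1 / K) - A * w $ 1"
  "X w $ 2 = (1 - nu) * nE * w $ 1 - dM * w $ 2"
  "X w $ 3 = nu * nE * w $ 1 * (w $ 2 / (w $ 2 + gs * w $ 4)) - dF * w $ 3"
  "X w $ 4 = k * (w $ 2 + w $ 4) - ds * w $ 4"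
  by (simp_all add: X_def closed_loop_def Let_def vector4 A_def)

lemma MM_iff: "w \<in> MM \<longleftrightarrow> w \<in> Dprime \<and> g1 w \<ge> 0 \<and> g2 w \<ge> 0 \<and> g3 w \<ge> 0"
  by (auto simp: MM_def Mset_def T1_def T2_def T3_def g1_def g2_def g3_def A_def kap_def)

lemma filippov_comp:
  assumes w: "w \<in> Dprime" and v: "v \<in> filippov_set X Dprime w"
  shows "v $ 1 = X w $ 1" "v $ 2 = X w $ 2" "v $ 4 = X w $ 4"
    "v $ 3 \<le> nu * nE * w $ 1 * hh w - dF * w $ 3"
proof -
  have c: "\<And>i. continuous (at w within Dprime) (\<lambda>u::real^4. u $ i)" by (rule cont_vec_nth_within)
  have eq: "v $ i = X w $ i" if "continuous (at w within Dprime) (\<lambda>u. X u $ i)" for i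
  proof -
    have "1 * v $ i \<le> X w $ i"
      by (rule filippov_le[OF v, where \<psi> = "\<lambda>u. X u $ i"]) (use that in auto)
    moreover have "(-1) * v $ i \<le> - X w $ i"
      by (rule filippov_le[OF v, where \<psi> = "\<lambda>u. - X u $ i"]) (use that in \<open>auto intro: continuous_intros\<close>)
    ultimately show ?thesis by simp
  qed
  show "v $ 1 = X w $ 1" by (rule eq) (simp only: X_comp, intro continuous_intros c, use pos in simp)
  show "v $ 2 = X w $ 2" by (rule eq) (simp only: X_comp, intro continuous_intros c)
  show "v $ 4 = X w $ 4" by (rule eq) (simp only: X_comp, intro continuous_intros c)
  show "v $ 3 \<le> nu * nE * w $ 1 * hh w - dF * w $ 3"
  proof (cases "w $ 2 + gs * w $ 4 = 0")
    case True
    have "1 * v $ 3 \<le> nu * nE * w $ 1 - dF * w $ 3"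
    proof (rule filippov_le[OF v, where \<psi> = "\<lambda>u. nu * nE * u $ 1 - dF * u $ 3"])
      show "continuous (at w within Dprime) (\<lambda>u. nu * nE * u $ 1 - dF * u $ 3)"
        by (intro continuous_intros c)
      fix u assume u: "u \<in> Dprime"
      have q: "u $ 2 / (u $ 2 + gs * u $ 4) \<le> 1"
      proof (cases "u $ 2 + gs * u $ 4 = 0")
        case False
        have "0 \<le> gs * u $ 4" using gam Dprime_nn[OF u] by simp
        then have "u $ 2 \<le> u $ 2 + gs * u $ 4" by simp
        moreover have "u $ 2 + gs * u $ 4 > 0" using False Dprime_nn[OF u, of 2] \<open>0 \<le> gs * u $ 4\<close> by linarith
        ultimately show ?thesis by simp
      qed simp
      have "nu * nE * u $ 1 * (u $ 2 / (u $ 2 + gs * u $ 4)) \<le> nu * nE * u $ 1 * 1"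
        using q nu pos Dprime_nn[OF u, of 1] by (intro mult_left_mono) auto
      then show "1 * X u $ 3 \<le> nu * nE * u $ 1 - dF * u $ 3" by (simp add: X_comp)
    qed
    then show ?thesis using True by (simp add: hh_def)
  next
    case False
    have "1 * v $ 3 \<le> X w $ 3"
    proof (rule filippov_le[OF v, where \<psi> = "\<lambda>u. X u $ 3"])
      show "continuous (at w within Dprime) (\<lambda>u. X u $ 3)"
        by (simp only: X_comp, intro continuous_intros c) (use False in auto)
    qed simp
    then show ?thesis using False by (simp add: hh_def X_comp)
  qed
qed

end


context sys begin

definition "c1 = bE * nu / (1 - nu) + P * (dM + 1) / ((1 - nu) * nE)"

lemma c1_nn: "c1 \<ge> 0"
  using pos nu P_pos by (simp add: c1_def)

lemma KI3:
  fixes E M F S v1 v2 :: real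
  assumes v1: "v1 = bE * F * (1 - E / K) - A * E" and v2: "v2 = (1 - nu) * nE * E - dM * M"
    and g3: "dM * M - (1 - nu) * nE * E \<le> 0"
  shows "- (dM * v2 - (1 - nu) * nE * v1) \<le> (1 - nu) * nE * max 0 (- (A * E - bE * F * (1 - E / K)))"
proof -
  have eq: "- (dM * v2 - (1 - nu) * nE * v1) = dM * (dM * M - (1 - nu) * nE * E) + (1 - nu) * nE * (- (A * E - bE * F * (1 - E / K)))"
    by (simp add: v1 v2 algebra_simps)
  have "dM * (dM * M - (1 - nu) * nE * E) \<le> 0" using g3 pos by (simp add: mult_nonneg_nonpos)
  moreover have "(1 - nu) * nE * (- (A * E - bE * F * (1 - E / K))) \<le> (1 - nu) * nE * max 0 (- (A * E - bE * F * (1 - E / K)))"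
    using nu pos by (intro mult_left_mono) auto
  ultimately show ?thesis using eq by linarith
qed

lemma KI2:
  fixes E M S v2 v4 :: real
  assumes v2: "v2 = (1 - nu) * nE * E - dM * M" and v4: "v4 = k * (M + S) - ds * S"
    and S: "S \<ge> 0" and g2: "kap * S - M \<le> 0"
  shows "- (kap * v4 - v2) \<le> max 0 (- (dM * M - (1 - nu) * nE * E))"
proof -
  have "k * (kap * S) \<le> k * M" using g2 k_pos by (intro mult_left_mono) auto
  moreover have "0 \<le> S * (k * (1 + kap) - ds)" using S k_kap by simp
  ultimately have "v4 \<ge> 0" unfolding v4 by (simp add: algebra_simps)
  then have "kap * v4 \<ge> 0" using kap_pos by simp
  then show ?thesis unfolding v2 by (simp add: algebra_simps)
qed

lemma KI1:
  fixes E M F S v1 v3 H :: real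
  assumes nn: "E \<ge> 0" "M \<ge> 0" "F \<ge> 0" "S \<ge> 0"
    and v1: "v1 = bE * F * (1 - E / K) - A * E"
    and v3: "v3 \<le> nu * nE * E * H - dF * F"
    and H: "H = (if M + gs * S = 0 then 1 else M / (M + gs * S))"
    and g1: "A * E - bE * F * (1 - E / K) \<le> 0"
  shows "- (A * v1 - bE * (v3 * (1 - E / K) - F * v1 / K))
           \<le> c1 * (max 0 (- (kap * S - M)) + max 0 (- (dM * M - (1 - nu) * nE * E)))"
proof -
  define u where "u = 1 - E / K"
  define m2 where "m2 = max 0 (- (kap * S - M))"
  define m3 where "m3 = max 0 (- (dM * M - (1 - nu) * nE * E))"
  have m2nn: "m2 \<ge> 0" and m3nn: "m3 \<ge> 0" by (auto simp: m2_def m3_def)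
  have EK: "E < K"
  proof (rule ccontr)
    assume "\<not> E < K"
    then have "u \<le> 0" using pos by (simp add: u_def)
    then have "bE * F * u \<le> 0" using pos nn by (simp add: mult_nonneg_nonpos)
    moreover have "A * E > 0" using \<open>\<not> E < K\<close> pos A_pos by simp
    ultimately show False using g1 by (simp add: u_def)
  qed
  have u0: "u > 0" using EK pos by (simp add: u_def)
  have u1: "u \<le> 1" using nn pos by (simp add: u_def)
  have bFu: "bE * F * u \<ge> A * E" using g1 by (simp add: u_def)
  have v1nn: "v1 \<ge> 0" using g1 v1 by simp
  have Hnn: "H \<ge> 0" using H nn gam by auto
  have "- (A * v1 - bE * (v3 * (1 - E / K) - F * v1 / K)) = - A * v1 + bE * u * v3 - bE * F * v1 / K"
    by (simp add: u_def algebra_simps)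
  also have "\<dots> \<le> bE * u * v3"
  proof -
    have "A * v1 \<ge> 0" using A_pos v1nn by simp
    moreover have "bE * F * v1 / K \<ge> 0" using pos nn v1nn by simp
    ultimately show ?thesis by linarith
  qed
  also have "\<dots> \<le> bE * u * (nu * nE * E * H - dF * F)"
    using v3 pos u0 by (intro mult_left_mono) auto
  also have "\<dots> = (bE * nu * nE) * (E * H) * u - dF * (bE * F * u)" by (simp add: algebra_simps)
  also have "\<dots> \<le> (bE * nu * nE) * (E * H) - dF * (A * E)"
  proof -
    have "(bE * nu * nE) * (E * H) * u \<le> (bE * nu * nE) * (E * H) * 1"
      using u1 pos nu nn Hnn by (intro mult_left_mono) auto
    moreover have "dF * (A * E) \<le> dF * (bE * F * u)" using bFu pos by (intro mult_left_mono) auto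
    ultimately show ?thesis by simp
  qed
  also have "\<dots> \<le> c1 * (m2 + m3)"
  proof (cases "M + gs * S = 0")
    case True
    then have M0: "M = 0" using nn gam by (smt (verit) mult_nonneg_nonneg)
    then have m3: "m3 = (1 - nu) * nE * E" using nu pos nn by (simp add: m3_def)
    have "(bE * nu * nE) * (E * H) - dF * (A * E) \<le> (bE * nu * nE) * E"
      using True H pos A_pos nn by simp
    also have "\<dots> = bE * nu / (1 - nu) * m3" unfolding m3 using nu by (simp add: field_simps)
    also have "\<dots> \<le> c1 * m3"
      using m3nn by (intro mult_right_mono) (use pos nu P_pos in \<open>auto simp: c1_def\<close>)
    also have "\<dots> \<le> c1 * (m2 + m3)" using c1_nn m2nn by (intro mult_left_mono) auto
    finally show ?thesis .
  next
    case False
    define D where "D = M + gs * S"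
    have Dpos: "D > 0" using False nn gam unfolding D_def by (smt (verit) mult_nonneg_nonneg)
    have HD: "H = M / D" using H False by (simp add: D_def)
    have num: "bE * nu * nE * M - dF * A * D = P * (M - kap * S)"
      using kapP by (simp add: D_def P_def algebra_simps)
    have Qeq: "(bE * nu * nE) * (E * H) - dF * (A * E) = P * (E * (M - kap * S) / D)"
    proof -
      have "(bE * nu * nE) * (E * H) - dF * (A * E) = E * (bE * nu * nE * M - dF * A * D) / D"
        using Dpos by (simp add: HD field_simps)
      then show ?thesis using num by simp
    qed
    show ?thesis
    proof (cases "M - kap * S \<le> 0")
      case True
      have "E * (M - kap * S) / D \<le> 0" using True nn Dpos by (simp add: divide_nonpos_pos mult_nonneg_nonpos)
      then have "P * (E * (M - kap * S) / D) \<le> 0" using P_pos mult_nonneg_nonpos[of P "E * (M - kap * S) / D"] by linarith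
      moreover have "c1 * (m2 + m3) \<ge> 0" using c1_nn m2nn m3nn by simp
      ultimately show ?thesis using Qeq by linarith
    next
      case False
      then have m2: "m2 = M - kap * S" by (simp add: m2_def)
      have m2M: "m2 \<le> M" using m2 kap_pos nn by simp
      have MD: "M \<le> D" using nn gam by (simp add: D_def)
      have Em3: "(1 - nu) * nE * E \<le> dM * M + m3" by (simp add: m3_def)
      have cpos: "(1 - nu) * nE > 0" using nu pos by simp
      have "(1 - nu) * nE * (E * m2 / D) = ((1 - nu) * nE * E) * (m2 / D)" by simp
      also have "\<dots> \<le> (dM * M + m3) * (m2 / D)"
        using Em3 m2nn Dpos by (intro mult_right_mono) auto
      also have "\<dots> = dM * (M / D) * m2 + m3 * (m2 / D)" by (simp add: algebra_simps)
      also have "\<dots> \<le> dM * 1 * m2 + m3 * 1"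
      proof (rule add_mono)
        have "M / D \<le> 1" using MD Dpos by simp
        then show "dM * (M / D) * m2 \<le> dM * 1 * m2" using pos m2nn by (intro mult_right_mono mult_left_mono) auto
        have "m2 / D \<le> 1" using m2M MD Dpos by simp
        then show "m3 * (m2 / D) \<le> m3 * 1" using m3nn by (intro mult_left_mono) auto
      qed
      finally have "(1 - nu) * nE * (E * m2 / D) \<le> dM * m2 + m3" by simp
      then have Eb: "E * m2 / D \<le> (dM * m2 + m3) / ((1 - nu) * nE)"
        using cpos by (simp add: le_divide_eq mult.commute)
      have "P * (E * (M - kap * S) / D) = P * (E * m2 / D)" using m2 by simp
      also have "\<dots> \<le> P * ((dM * m2 + m3) / ((1 - nu) * nE))" using Eb P_pos by (intro mult_left_mono) auto
      also have "\<dots> = (P * dM / ((1 - nu) * nE)) * m2 + (P / ((1 - nu) * nE)) * m3" by (simp add: add_divide_distrib algebra_simps)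
      also have "\<dots> \<le> c1 * m2 + c1 * m3"
      proof (rule add_mono)
        have "P * dM / ((1 - nu) * nE) \<le> c1"
        proof -
          have "P * dM / ((1 - nu) * nE) \<le> P * (dM + 1) / ((1 - nu) * nE)"
            using P_pos cpos by (intro divide_right_mono) auto
          moreover have "bE * nu / (1 - nu) \<ge> 0" using pos nu by simp
          ultimately show ?thesis by (simp add: c1_def)
        qed
        then show "(P * dM / ((1 - nu) * nE)) * m2 \<le> c1 * m2" using m2nn by (intro mult_right_mono) auto
        have "P / ((1 - nu) * nE) \<le> c1"
        proof -
          have "P * 1 / ((1 - nu) * nE) \<le> P * (dM + 1) / ((1 - nu) * nE)"
            using P_pos cpos pos by (intro divide_right_mono mult_left_mono) auto
          moreover have "bE * nu / (1 - nu) \<ge> 0" using pos nu by simp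
          ultimately show ?thesis by (simp add: c1_def)
        qed
        then show "(P / ((1 - nu) * nE)) * m3 \<le> c1 * m3" using m3nn by (intro mult_right_mono) auto
      qed
      finally show ?thesis using Qeq by (simp add: algebra_simps)
    qed
  qed
  finally show ?thesis by (simp add: m2_def m3_def)
qed

end


context sys begin

lemma invariance:
  assumes sol: "filippov_solution X Dprime z I" and I0: "0 \<in> I" and Ipos: "I \<subseteq> {0..}"
    and z0: "z 0 \<in> MM"
  shows "\<forall>t\<in>I. z t \<in> MM"
proof -
  have Iint: "is_interval I" and range: "z ` I \<subseteq> Dprime"
    and lip: "\<forall>t\<in>I. \<exists>\<delta>>0. \<exists>L. L-lipschitz_on (cball t \<delta> \<inter> I) z"
    using sol unfolding filippov_solution_def by auto
  obtain N where N: "N \<in> null_sets lebesgue"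
    and ND: "\<forall>t\<in>I - N. \<exists>v. (z has_vector_derivative v) (at t within I) \<and> v \<in> filippov_set X Dprime (z t)"
    using sol unfolding filippov_solution_def by blast
  define CC where "CC = c1 + 1 + (1 - nu) * nE"
  define V where "V t = max 0 (- g1 (z t)) + max 0 (- g2 (z t)) + max 0 (- g3 (z t))" for t
  have plcV: "\<forall>x\<in>I. plc V I x"
    unfolding V_def g1_def g2_def g3_def
    by (intro ballI plc_add plc_negpart plc_diff plc_mult plc_const plc_divc plc_comp[OF lip])
  have nn: "\<forall>t\<in>I. V t \<ge> 0" by (simp add: V_def)
  have V0: "V 0 = 0" using z0 by (simp add: V_def MM_iff)
  have cond: "\<forall>t\<in>I - N. RB V t (I \<inter> {t<..}) (CC * V t)"
  proof
    fix t assume t: "t \<in> I - N"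
    obtain v where vd: "(z has_vector_derivative v) (at t within I)" "v \<in> filippov_set X Dprime (z t)"
      using ND t by blast
    define S where "S = I \<inter> {t<..}"
    have Ssub: "S \<subseteq> {t<..}" by (simp add: S_def)
    have zt: "z t \<in> Dprime" using range t by auto
    have vd': "(z has_vector_derivative v) (at t within S)"
      by (rule has_vector_derivative_within_subset[OF vd(1)]) (auto simp: S_def)
    have d: "\<And>i. ((\<lambda>s. z s $ i) has_real_derivative v $ i) (at t within S)" by (rule comp_deriv[OF vd'])
    note fc = filippov_comp[OF zt vd(2)]
    have nnz: "\<And>i. z t $ i \<ge> 0" using Dprime_nn[OF zt] .
    define m1 where "m1 = max 0 (- g1 (z t))"
    define m2 where "m2 = max 0 (- g2 (z t))"
    define m3 where "m3 = max 0 (- g3 (z t))"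
    have m1nn: "m1 \<ge> 0" and m2nn: "m2 \<ge> 0" and m3nn: "m3 \<ge> 0" by (auto simp: m1_def m2_def m3_def)
    have Vt: "V t = m1 + m2 + m3" by (simp add: V_def m1_def m2_def m3_def)
    define d1 where "d1 = - (A * v $ 1 - bE * (v $ 3 * (1 - z t $ 1 / K) - z t $ 3 * v $ 1 / K))"
    define d2 where "d2 = - (kap * v $ 4 - v $ 2)"
    define d3 where "d3 = - (dM * v $ 2 - (1 - nu) * nE * v $ 1)"
    have D1: "((\<lambda>s. - g1 (z s)) has_real_derivative d1) (at t within S)"
      unfolding g1_def d1_def using pos by (auto intro!: derivative_eq_intros d simp: field_simps)
    have D2: "((\<lambda>s. - g2 (z s)) has_real_derivative d2) (at t within S)"
      unfolding g2_def d2_def by (auto intro!: derivative_eq_intros d)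
    have D3: "((\<lambda>s. - g3 (z s)) has_real_derivative d3) (at t within S)"
      unfolding g3_def d3_def by (auto intro!: derivative_eq_intros d)
    note R1 = RB_pospart[OF RB_deriv[OF D1 Ssub] DERIV_continuous[OF D1] Ssub]
    note R2 = RB_pospart[OF RB_deriv[OF D2 Ssub] DERIV_continuous[OF D2] Ssub]
    note R3 = RB_pospart[OF RB_deriv[OF D3 Ssub] DERIV_continuous[OF D3] Ssub]
    have c0: "(1 - nu) * nE \<ge> 0" using nu pos by simp
    have B1: "(if - g1 (z t) > 0 then d1 else if - g1 (z t) = 0 then max 0 d1 else 0) \<le> c1 * (m2 + m3)"
    proof (rule pospart_le)
      show "- g1 (z t) \<ge> 0 \<longrightarrow> d1 \<le> c1 * (m2 + m3)"
      proof
        assume "- g1 (z t) \<ge> 0"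
        then show "d1 \<le> c1 * (m2 + m3)" unfolding d1_def m2_def m3_def g2_def g3_def
          by (intro KI1) (use nnz fc in \<open>auto simp: X_comp hh_def g1_def\<close>)
      qed
      show "- g1 (z t) \<le> 0 \<longrightarrow> 0 \<le> c1 * (m2 + m3)" using c1_nn m2nn m3nn by simp
    qed
    have B2: "(if - g2 (z t) > 0 then d2 else if - g2 (z t) = 0 then max 0 d2 else 0) \<le> m3"
    proof (rule pospart_le)
      show "- g2 (z t) \<ge> 0 \<longrightarrow> d2 \<le> m3"
      proof
        assume "- g2 (z t) \<ge> 0"
        then show "d2 \<le> m3" unfolding d2_def m3_def g3_def
          by (intro KI2) (use nnz fc in \<open>auto simp: X_comp g2_def\<close>)
      qed
      show "- g2 (z t) \<le> 0 \<longrightarrow> 0 \<le> m3" using m3nn by simp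
    qed
    have B3: "(if - g3 (z t) > 0 then d3 else if - g3 (z t) = 0 then max 0 d3 else 0) \<le> (1 - nu) * nE * m1"
    proof (rule pospart_le)
      show "- g3 (z t) \<ge> 0 \<longrightarrow> d3 \<le> (1 - nu) * nE * m1"
      proof
        assume "- g3 (z t) \<ge> 0"
        then show "d3 \<le> (1 - nu) * nE * m1" unfolding d3_def m1_def g1_def
          by (intro KI3) (use nnz fc in \<open>auto simp: X_comp g3_def\<close>)
      qed
      show "- g3 (z t) \<le> 0 \<longrightarrow> 0 \<le> (1 - nu) * nE * m1" using m1nn c0 by simp
    qed
    have Veq: "V = (\<lambda>s. max 0 (- g1 (z s)) + max 0 (- g2 (z s)) + max 0 (- g3 (z s)))"
      by (simp add: V_def fun_eq_iff)
    have "RB V t S ((if - g1 (z t) > 0 then d1 else if - g1 (z t) = 0 then max 0 d1 else 0)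
        + (if - g2 (z t) > 0 then d2 else if - g2 (z t) = 0 then max 0 d2 else 0)
        + (if - g3 (z t) > 0 then d3 else if - g3 (z t) = 0 then max 0 d3 else 0))"
      unfolding Veq by (rule RB_add[OF RB_add[OF R1 R2] R3])
    moreover have "c1 * (m2 + m3) + m3 + (1 - nu) * nE * m1 \<le> CC * V t"
    proof -
      have "CC * V t - (c1 * (m2 + m3) + m3 + (1 - nu) * nE * m1) = c1 * m1 + m1 + m2 + (1 - nu) * nE * (m2 + m3)"
        by (simp add: CC_def Vt algebra_simps)
      moreover have "c1 * m1 \<ge> 0" using c1_nn m1nn by simp
      moreover have "(1 - nu) * nE * (m2 + m3) \<ge> 0" using c0 m2nn m3nn by simp
      ultimately show ?thesis using m1nn m2nn by linarith
    qed
    ultimately have "RB V t S (CC * V t)"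
      using B1 B2 B3 Ssub by (elim RB_mono) linarith
    then show "RB V t (I \<inter> {t<..}) (CC * V t)" by (simp add: S_def)
  qed
  have "\<forall>t\<in>I. V t \<le> V 0 * exp (CC * t)"
    by (rule GL[OF Iint I0 Ipos plcV nn _ cond]) (use N negligible_iff_null_sets in blast)
  then have V: "\<forall>t\<in>I. V t \<le> 0" using V0 by simp
  show ?thesis
  proof
    fix t assume t: "t \<in> I"
    then have "V t \<le> 0" using V by blast
    then have "g1 (z t) \<ge> 0 \<and> g2 (z t) \<ge> 0 \<and> g3 (z t) \<ge> 0" unfolding V_def by linarith
    moreover have "z t \<in> Dprime" using range t by auto
    ultimately show "z t \<in> MM" by (simp add: MM_iff)
  qed
qed

end


lemma plc_pospart: assumes "plc f S x" shows "plc (\<lambda>y. max 0 (f y)) S x"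
  using plc_negpart[OF plc_neg[OF assms]] by simp

lemma exp_neg_lim: "(c::real) > 0 \<Longrightarrow> ((\<lambda>t. exp (- c * t)) \<longlongrightarrow> 0) at_top"
proof -
  assume c: "c > 0"
  have "filterlim (\<lambda>t. (- c) * t) at_bot at_top"
    by (rule filterlim_tendsto_neg_mult_at_bot[OF tendsto_const _ filterlim_ident]) (use c in simp)
  then show ?thesis by (rule filterlim_compose[OF exp_at_bot])
qed

lemma U4: "(UNIV :: 4 set) = {1,2,3,4}" using exhaust_4 by auto

lemma norm4: "norm (w::real^4) \<le> \<bar>w$1\<bar> + \<bar>w$2\<bar> + \<bar>w$3\<bar> + \<bar>w$4\<bar>"
proof -
  have "(\<Sum>i\<in>UNIV. \<bar>w $ i\<bar>) = \<bar>w$1\<bar> + \<bar>w$2\<bar> + \<bar>w$3\<bar> + \<bar>w$4\<bar>" unfolding U4 by simp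
  then show ?thesis using norm_le_l1_cart[of w] by simp
qed

context sys begin

definition "rho = (1 / kap + k / (ds - k)) / 2"
definition "Hq = kap / (kap + gs)"
definition "Hp = 1 / (1 + gs * rho)"
definition "lam = k / rho"
definition "cw = dM * gs / ((1 - nu) * nE * (1 + gs * rho))"
definition "eta = (Hq - Hp) / (2 * Hp)"
definition "aa = bE * (1 + eta) / dF"
definition "mu = (A - bE * nu * nE * Hp / dF) / 2"
definition "ee = mu / (2 * (1 - nu) * nE)"
definition "ff = ee * dM / (2 * k)"
definition "bb = 2 * aa * nu * nE * cw / lam"
definition "cc = min (min (mu / 2) (eta * dF / (1 + eta))) (min (lam / 2) (min (dM / 2) (ds - k)))"
definition "LL w = w $ 1 + aa * w $ 3 + bb * max 0 (rho * w $ 2 - w $ 4) + ee * w $ 2 + ff * w $ 4"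
  for w :: "real^4"

lemma dsk: "ds - k > 0" using k_hi by simp

lemma rho_bounds: "1 / kap < rho" "rho < k / (ds - k)"
proof -
  have "ds - k < k * kap" using k_kap by (simp add: algebra_simps)
  then have "1 / kap < k / (ds - k)" using kap_pos dsk by (simp add: field_simps)
  moreover have avg: "\<And>a b::real. a < b \<Longrightarrow> a < (a + b) / 2 \<and> (a + b) / 2 < b" by simp
  ultimately show "1 / kap < rho" "rho < k / (ds - k)" unfolding rho_def by blast+
qed

lemma rho_pos: "rho > 0"
proof -
  have "1 / kap > 0" using kap_pos by simp
  then show ?thesis using rho_bounds(1) by linarith
qed

lemma krho: "k - (ds - k) * rho > 0"
  using rho_bounds(2) dsk by (simp add: less_divide_eq mult.commute)

lemma Hq_eq: "Hq * (bE * nu * nE) = dF * A"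
proof -
  have "kap * (bE * nu * nE) = dF * A * (kap + gs)"
    using kapP by (simp add: P_def algebra_simps)
  then show ?thesis using kap_pos gam by (simp add: Hq_def field_simps)
qed

lemma Hp_pos: "Hp > 0" using gam rho_pos by (simp add: Hp_def add_pos_pos)

lemma Hp_lt: "Hp < Hq"
proof -
  have "1 < kap * rho" using rho_bounds(1) kap_pos by (simp add: divide_less_eq mult.commute)
  then have "gs < gs * (kap * rho)" using gam by simp
  then have "kap + gs < kap * (1 + gs * rho)" by (simp add: algebra_simps)
  then show ?thesis using kap_pos gam rho_pos
    by (simp add: Hp_def Hq_def divide_less_eq less_divide_eq add_pos_pos mult.commute)
qed

lemma eta_pos: "eta > 0" using Hp_lt Hp_pos by (simp add: eta_def)

lemma etaHp: "(1 + eta) * Hp = (Hq + Hp) / 2"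
  using Hp_pos by (simp add: eta_def field_simps)

lemma mu_pos: "mu > 0"
proof -
  have "bE * nu * nE * Hp < bE * nu * nE * Hq" using Hp_lt pos nu by simp
  then have "bE * nu * nE * Hp < dF * A" using Hq_eq by (simp add: mult.commute)
  then have "bE * nu * nE * Hp / dF < A" using pos by (simp add: divide_less_eq mult.commute)
  then show ?thesis by (simp add: mu_def)
qed

lemma lam_pos: "lam > 0" using k_pos rho_pos by (simp add: lam_def)
lemma cw_pos: "cw > 0" using pos gam nu rho_pos by (simp add: cw_def add_pos_pos)
lemma aa_pos: "aa > 0" using pos eta_pos by (simp add: aa_def add_pos_pos)
lemma ee_pos: "ee > 0" using mu_pos nu pos by (simp add: ee_def)
lemma ff_pos: "ff > 0" using ee_pos pos k_pos by (simp add: ff_def)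
lemma bb_pos: "bb > 0" using aa_pos nu pos cw_pos lam_pos by (simp add: bb_def)
lemma cc_pos: "cc > 0"
  using mu_pos eta_pos pos lam_pos dsk by (simp add: cc_def add_pos_pos)

lemma coefE: "- A + aa * nu * nE * Hp + ee * (1 - nu) * nE = - mu / 2"
proof -
  have "aa * nu * nE * Hp = (bE * nu * nE) * ((1 + eta) * Hp) / dF" by (simp add: aa_def)
  also have "\<dots> = (bE * nu * nE) * ((Hq + Hp) / 2) / dF" by (simp only: etaHp)
  also have "\<dots> = (bE * nu * nE * Hq + bE * nu * nE * Hp) / (2 * dF)" by (simp add: field_simps)
  also have "\<dots> = (dF * A + bE * nu * nE * Hp) / (2 * dF)" using Hq_eq by (simp add: mult.commute)
  also have "\<dots> = A / 2 + bE * nu * nE * Hp / dF / 2" using pos by (simp add: field_simps)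
  finally have 1: "aa * nu * nE * Hp = A / 2 + bE * nu * nE * Hp / dF / 2" .
  have 2: "ee * (1 - nu) * nE = mu / 2" using nu pos by (simp add: ee_def field_simps)
  show ?thesis using 1 2 by (simp add: mu_def field_simps)
qed

lemma coefF: "bE - aa * dF = - (eta * dF / (1 + eta)) * aa"
proof -
  have ne: "1 + eta \<noteq> 0" "dF \<noteq> 0" using eta_pos pos by auto
  have ne3: "dF + dF * eta \<noteq> 0" using ne by (metis distrib_left mult_eq_0_iff mult.right_neutral)
  have 1: "(eta * dF / (1 + eta)) * aa = eta * bE" unfolding aa_def using ne ne3 by (simp add: field_simps)
  have 2: "aa * dF = bE * (1 + eta)" unfolding aa_def using ne by simp
  show ?thesis using 1 2 by (simp add: algebra_simps)
qed

lemma coefW: "aa * nu * nE * cw - bb * lam = - (lam / 2) * bb"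
  using lam_pos by (simp add: bb_def field_simps)

lemma coefM: "- ee * dM + ff * k = - (dM / 2) * ee"
  using k_pos by (simp add: ff_def field_simps)

lemma coefS: "ff * k - ff * ds = - (ds - k) * ff"
  by (simp add: algebra_simps)

lemma EH:
  fixes E M S H :: real
  assumes nn: "E \<ge> 0" "M \<ge> 0" "S \<ge> 0" and g3: "(1 - nu) * nE * E \<le> dM * M"
    and H: "H = (if M + gs * S = 0 then 1 else M / (M + gs * S))"
  shows "E * H \<le> Hp * E + cw * max 0 (rho * M - S)"
proof -
  have cpos: "(1 - nu) * nE > 0" using nu pos by simp
  have Wnn: "cw * max 0 (rho * M - S) \<ge> 0" using cw_pos by simp
  show ?thesis
  proof (cases "M + gs * S = 0")
    case True
    moreover have "gs * S \<ge> 0" using nn gam by simp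
    ultimately have "M = 0" using nn by linarith
    then have "(1 - nu) * nE * E \<le> (1 - nu) * nE * 0" using g3 by simp
    then have "E \<le> 0" by (simp only: mult_le_cancel_left_pos[OF cpos])
    then have "E = 0" using nn by simp
    then show ?thesis using Wnn by simp
  next
    case False
    define D where "D = M + gs * S"
    have "gs * S \<ge> 0" using nn gam by simp
    then have Dpos: "D > 0" using False nn unfolding D_def by linarith
    have HD: "H = M / D" using H False by (simp add: D_def)
    have gp: "1 + gs * rho > 0" using gam rho_pos by (simp add: add_pos_pos)
    show ?thesis
    proof (cases "rho * M - S \<le> 0")
      case True
      have "M * (1 + gs * rho) \<le> D" using True gam by (simp add: D_def algebra_simps)
      then have "M / D \<le> Hp" using Dpos gp by (simp add: Hp_def field_simps)
      then have "E * H \<le> E * Hp" unfolding HD using nn by (intro mult_left_mono) auto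
      then show ?thesis using Wnn by (simp add: mult.commute)
    next
      case False
      define W where "W = rho * M - S"
      have Wpos: "W > 0" using False by (simp add: W_def)
      have "rho * M > 0" using Wpos nn by (simp add: W_def)
      then have Mpos: "M > 0" using rho_pos by (simp add: zero_less_mult_iff)
      have eq: "E * (M / D) - Hp * E = gs * W * (E / D) / (1 + gs * rho)"
        using Dpos gp by (simp add: Hp_def W_def D_def field_simps)
      have ED: "E / D \<le> dM / ((1 - nu) * nE)"
      proof -
        have "M \<le> D" using nn gam by (simp add: D_def)
        moreover have "0 < D * M" using Dpos Mpos by simp
        ultimately have "E / D \<le> E / M" using nn by (intro divide_left_mono) auto
        also have "E / M \<le> dM / ((1 - nu) * nE)" using g3 Mpos cpos
          by (simp add: divide_le_eq le_divide_eq mult.commute mult.left_commute)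
        finally show ?thesis .
      qed
      have "gs * W * (E / D) / (1 + gs * rho) \<le> gs * W * (dM / ((1 - nu) * nE)) / (1 + gs * rho)"
        using ED gam Wpos gp by (intro divide_right_mono mult_left_mono) auto
      also have "\<dots> = cw * W" by (simp add: cw_def field_simps)
      finally have "E * H - Hp * E \<le> cw * W" using eq HD by simp
      then show ?thesis using False by (simp add: W_def)
    qed
  qed
qed

lemma KW:
  fixes M S v2 v4 :: real
  assumes nn: "M \<ge> 0" "S \<ge> 0" and v2: "v2 \<le> 0" and v4: "v4 = k * (M + S) - ds * S"
    and W: "rho * M - S \<ge> 0"
  shows "rho * v2 - v4 \<le> - lam * (rho * M - S)"
proof -
  define Wv where "Wv = rho * M - S"
  have "rho * v2 \<le> 0" using v2 rho_pos by (simp add: mult_nonneg_nonpos)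
  have Seq: "S = rho * M - Wv" by (simp add: Wv_def)
  have "- v4 = - (k - (ds - k) * rho) * M - (ds - k) * Wv" by (simp add: v4 Seq algebra_simps)
  moreover have "(k - (ds - k) * rho) * (Wv / rho) \<le> (k - (ds - k) * rho) * M"
  proof -
    have "Wv / rho \<le> M" using nn rho_pos by (simp add: Wv_def divide_le_eq mult.commute)
    then show ?thesis using krho by (intro mult_left_mono) auto
  qed
  moreover have "(k - (ds - k) * rho) * (Wv / rho) + (ds - k) * Wv = lam * Wv"
    using rho_pos by (simp add: lam_def field_simps)
  ultimately have "- v4 \<le> - lam * Wv" by (simp add: algebra_simps)
  then show ?thesis using \<open>rho * v2 \<le> 0\<close> by (simp add: Wv_def)
qed

end


context sys begin

lemma cc_le: "cc \<le> mu / 2" "cc \<le> eta * dF / (1 + eta)" "cc \<le> lam / 2" "cc \<le> dM / 2" "cc \<le> ds - k"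
  unfolding cc_def
  apply (rule min.coboundedI1, rule min.cobounded1)
  apply (rule min.coboundedI1, rule min.cobounded2)
  apply (rule min.coboundedI2, rule min.cobounded1)
  apply (rule min.coboundedI2, rule min.coboundedI2, rule min.cobounded1)
  apply (rule min.coboundedI2, rule min.coboundedI2, rule min.cobounded2)
  done

lemma KI4:
  fixes E M F S v1 v2 v3 v4 Dw H :: real
  assumes nn: "E \<ge> 0" "M \<ge> 0" "F \<ge> 0" "S \<ge> 0" and g3: "(1 - nu) * nE * E \<le> dM * M"
    and v1: "v1 = bE * F * (1 - E / K) - A * E" and v2: "v2 = (1 - nu) * nE * E - dM * M"
    and v3: "v3 \<le> nu * nE * E * H - dF * F"
    and H: "H = (if M + gs * S = 0 then 1 else M / (M + gs * S))"
    and v4: "v4 = k * (M + S) - ds * S"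
    and Dw: "Dw \<le> - lam * max 0 (rho * M - S)"
  shows "v1 + aa * v3 + bb * Dw + ee * v2 + ff * v4
          \<le> - cc * (E + aa * F + bb * max 0 (rho * M - S) + ee * M + ff * S)"
proof -
  define W where "W = max 0 (rho * M - S)"
  have Wnn: "W \<ge> 0" by (simp add: W_def)
  have t1: "v1 \<le> bE * F - A * E"
  proof -
    have "bE * F * E / K \<ge> 0" using pos nn by simp
    moreover have "v1 = bE * F - A * E - bE * F * E / K" using pos by (simp add: v1 algebra_simps)
    ultimately show ?thesis by linarith
  qed
  have EHb: "E * H \<le> Hp * E + cw * W" unfolding W_def by (rule EH[OF nn(1,2,4) g3 H])
  have t3: "aa * v3 \<le> aa * (nu * nE * (Hp * E + cw * W) - dF * F)"
  proof -
    have "nu * nE * (E * H) \<le> nu * nE * (Hp * E + cw * W)" using EHb nu pos by (intro mult_left_mono) auto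
    then have "v3 \<le> nu * nE * (Hp * E + cw * W) - dF * F" using v3 by (simp add: mult.assoc)
    then show ?thesis using aa_pos by (intro mult_left_mono) auto
  qed
  have tw: "bb * Dw \<le> bb * (- lam * W)" using Dw bb_pos unfolding W_def by (intro mult_left_mono) auto
  have "v1 + aa * v3 + bb * Dw + ee * v2 + ff * v4 \<le>
      (bE * F - A * E) + aa * (nu * nE * (Hp * E + cw * W) - dF * F) + bb * (- lam * W)
      + ee * ((1 - nu) * nE * E - dM * M) + ff * (k * (M + S) - ds * S)"
    using t1 t3 tw by (simp add: v2 v4)
  also have "\<dots> = E * (- A + aa * nu * nE * Hp + ee * (1 - nu) * nE) + F * (bE - aa * dF)
      + W * (aa * nu * nE * cw - bb * lam) + M * (- ee * dM + ff * k) + S * (ff * k - ff * ds)"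
    by (simp add: algebra_simps)
  also have "\<dots> = E * (- mu / 2) + F * (- (eta * dF / (1 + eta)) * aa) + W * (- (lam / 2) * bb)
      + M * (- (dM / 2) * ee) + S * (- (ds - k) * ff)"
    unfolding coefE coefF coefW coefM coefS ..
  also have "\<dots> \<le> - cc * (E + aa * F + bb * W + ee * M + ff * S)"
  proof -
    have a1: "cc * E \<le> (mu / 2) * E" using cc_le nn by (intro mult_right_mono) auto
    have a2: "cc * (aa * F) \<le> (eta * dF / (1 + eta)) * (aa * F)"
      using cc_le nn aa_pos by (intro mult_right_mono) auto
    have a3: "cc * (bb * W) \<le> (lam / 2) * (bb * W)" using cc_le Wnn bb_pos by (intro mult_right_mono) auto
    have a4: "cc * (ee * M) \<le> (dM / 2) * (ee * M)" using cc_le nn ee_pos by (intro mult_right_mono) auto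
    have a5: "cc * (ff * S) \<le> (ds - k) * (ff * S)" using cc_le nn ff_pos by (intro mult_right_mono) auto
    have e1: "E * (- mu / 2) + F * (- (eta * dF / (1 + eta)) * aa) + W * (- (lam / 2) * bb)
      + M * (- (dM / 2) * ee) + S * (- (ds - k) * ff) = - ((mu / 2) * E) - (eta * dF / (1 + eta)) * (aa * F)
      - (lam / 2) * (bb * W) - (dM / 2) * (ee * M) - (ds - k) * (ff * S)" by (simp add: algebra_simps)
    have e2: "- cc * (E + aa * F + bb * W + ee * M + ff * S) = - (cc * E) - cc * (aa * F) - cc * (bb * W)
      - cc * (ee * M) - cc * (ff * S)" by (simp add: algebra_simps)
    show ?thesis unfolding e1 e2 using a1 a2 a3 a4 a5 by linarith
  qed
  finally show ?thesis by (simp add: W_def)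
qed

lemma LL_nn: "w \<in> Dprime \<Longrightarrow> LL w \<ge> 0"
  using Dprime_nn[of w] aa_pos bb_pos ee_pos ff_pos by (simp add: LL_def)

definition "mn = min 1 (min aa (min ee ff))"
definition "Lc = 1 + aa + bb * rho + ee + ff"

lemma mn_pos: "mn > 0" using aa_pos ee_pos ff_pos by (simp add: mn_def)
lemma Lc_pos: "Lc > 0" using aa_pos ee_pos ff_pos bb_pos rho_pos by (simp add: Lc_def add_pos_pos)

lemma LL_low: assumes w: "w \<in> Dprime" shows "mn * (w$1 + w$2 + w$3 + w$4) \<le> LL w"
proof -
  note nn = Dprime_nn[OF w]
  have "mn * w$1 \<le> 1 * w$1" using nn by (intro mult_right_mono) (auto simp: mn_def)
  moreover have "mn * w$3 \<le> aa * w$3" using nn by (intro mult_right_mono) (auto simp: mn_def)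
  moreover have "mn * w$2 \<le> ee * w$2" using nn by (intro mult_right_mono) (auto simp: mn_def)
  moreover have "mn * w$4 \<le> ff * w$4" using nn by (intro mult_right_mono) (auto simp: mn_def)
  moreover have "bb * max 0 (rho * w$2 - w$4) \<ge> 0" using bb_pos by simp
  ultimately show ?thesis unfolding LL_def by (simp add: algebra_simps)
qed

lemma LL_up: assumes w: "w \<in> Dprime" shows "LL w \<le> Lc * (w$1 + w$2 + w$3 + w$4)"
proof -
  note nn = Dprime_nn[OF w]
  have "max 0 (rho * w$2 - w$4) \<le> rho * w$2" using nn rho_pos by simp
  then have b: "bb * max 0 (rho * w$2 - w$4) \<le> bb * rho * w$2" using bb_pos by (simp add: mult.assoc)
  have c1: "(Lc - 1) * w$1 \<ge> 0" using nn aa_pos ee_pos ff_pos bb_pos rho_pos by (simp add: Lc_def)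
  have c2: "(Lc - bb * rho - ee) * w$2 \<ge> 0" using nn aa_pos ee_pos ff_pos bb_pos rho_pos by (simp add: Lc_def)
  have c3: "(Lc - aa) * w$3 \<ge> 0" using nn aa_pos ee_pos ff_pos bb_pos rho_pos by (simp add: Lc_def)
  have c4: "(Lc - ff) * w$4 \<ge> 0" using nn aa_pos ee_pos ff_pos bb_pos rho_pos by (simp add: Lc_def)
  have "Lc * (w$1 + w$2 + w$3 + w$4) - (w$1 + aa * w$3 + bb * rho * w$2 + ee * w$2 + ff * w$4)
    = (Lc - 1) * w$1 + (Lc - bb * rho - ee) * w$2 + (Lc - aa) * w$3 + (Lc - ff) * w$4"
    by (simp add: algebra_simps)
  then show ?thesis using b c1 c2 c3 c4 unfolding LL_def by linarith
qed

lemma norm_sum: assumes w: "w \<in> Dprime"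
  shows "norm w \<le> w$1 + w$2 + w$3 + w$4" "w$1 + w$2 + w$3 + w$4 \<le> 4 * norm w"
proof -
  note nn = Dprime_nn[OF w]
  show "norm w \<le> w$1 + w$2 + w$3 + w$4" using norm4[of w] nn by simp
  have "\<And>i. w $ i \<le> norm w" using component_le_norm_cart by (metis abs_ge_self order_trans)
  then show "w$1 + w$2 + w$3 + w$4 \<le> 4 * norm w" by (smt (verit))
qed

end


context sys begin

lemma decay:
  assumes sol: "filippov_solution X Dprime z {0..}" and z0: "z 0 \<in> MM"
  shows "\<forall>t\<in>{0..}. LL (z t) \<le> LL (z 0) * exp (- cc * t)"
proof -
  have inv: "\<forall>t\<in>{0..}. z t \<in> MM" using invariance[OF sol _ _ z0] by simp
  have lip: "\<forall>t\<in>{0..}. \<exists>\<delta>>0. \<exists>L. L-lipschitz_on (cball t \<delta> \<inter> {0..}) z"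
    using sol unfolding filippov_solution_def by auto
  obtain N where N: "N \<in> null_sets lebesgue"
    and ND: "\<forall>t\<in>{0..} - N. \<exists>v. (z has_vector_derivative v) (at t within {0..}) \<and> v \<in> filippov_set X Dprime (z t)"
    using sol unfolding filippov_solution_def by blast
  define V where "V t = LL (z t)" for t
  have plcV: "\<forall>x\<in>{0..}. plc V {0..} x"
    unfolding V_def LL_def
    by (intro ballI plc_add plc_mult plc_const plc_pospart plc_diff plc_comp[OF lip])
  have nn: "\<forall>t\<in>{0..}. V t \<ge> 0" using inv LL_nn by (auto simp: V_def MM_iff)
  have cond: "\<forall>t\<in>{0..} - N. RB V t ({0..} \<inter> {t<..}) (- cc * V t)"
  proof
    fix t assume t: "t \<in> {0..} - N"
    obtain v where vd: "(z has_vector_derivative v) (at t within {0..})" "v \<in> filippov_set X Dprime (z t)"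
      using ND t by blast
    define S where "S = {0..} \<inter> {t<..}"
    have Ssub: "S \<subseteq> {t<..}" by (simp add: S_def)
    have ztM: "z t \<in> MM" using inv t by auto
    then have zt: "z t \<in> Dprime" and g3: "g3 (z t) \<ge> 0" by (auto simp: MM_iff)
    have vd': "(z has_vector_derivative v) (at t within S)"
      by (rule has_vector_derivative_within_subset[OF vd(1)]) (auto simp: S_def)
    have d: "\<And>i. ((\<lambda>s. z s $ i) has_real_derivative v $ i) (at t within S)" by (rule comp_deriv[OF vd'])
    note fc = filippov_comp[OF zt vd(2)]
    have nnz: "\<And>i. z t $ i \<ge> 0" using Dprime_nn[OF zt] .
    have aa0: "aa \<ge> 0" and bb0: "bb \<ge> 0" and ee0: "ee \<ge> 0" and ff0: "ff \<ge> 0"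
      using aa_pos bb_pos ee_pos ff_pos by auto
    have Dpsi: "((\<lambda>s. rho * z s $ 2 - z s $ 4) has_real_derivative rho * v $ 2 - v $ 4) (at t within S)"
      by (auto intro!: derivative_eq_intros d)
    note R1 = RB_deriv[OF d[of 1] Ssub]
    note R3 = RB_cmult[OF RB_deriv[OF d[of 3] Ssub] aa0 Ssub]
    note RW = RB_cmult[OF RB_pospart[OF RB_deriv[OF Dpsi Ssub] DERIV_continuous[OF Dpsi] Ssub] bb0 Ssub]
    note R2 = RB_cmult[OF RB_deriv[OF d[of 2] Ssub] ee0 Ssub]
    note R4 = RB_cmult[OF RB_deriv[OF d[of 4] Ssub] ff0 Ssub]
    define Dw where "Dw = (if rho * z t $ 2 - z t $ 4 > 0 then rho * v $ 2 - v $ 4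
        else if rho * z t $ 2 - z t $ 4 = 0 then max 0 (rho * v $ 2 - v $ 4) else 0)"
    have Veq: "V = (\<lambda>s. z s $ 1 + aa * z s $ 3 + bb * max 0 (rho * z s $ 2 - z s $ 4) + ee * z s $ 2 + ff * z s $ 4)"
      by (simp add: V_def LL_def fun_eq_iff)
    have RBsum: "RB V t S (v $ 1 + aa * v $ 3 + bb * Dw + ee * v $ 2 + ff * v $ 4)"
      unfolding Veq Dw_def by (rule RB_add[OF RB_add[OF RB_add[OF RB_add[OF R1 R3] RW] R2] R4])
    have v2le: "v $ 2 \<le> 0" using fc(2) g3 by (simp add: X_comp g3_def)
    have Dwb: "Dw \<le> - lam * max 0 (rho * z t $ 2 - z t $ 4)"
      unfolding Dw_def
    proof (rule pospart_le)
      show "rho * z t $ 2 - z t $ 4 \<ge> 0 \<longrightarrow> rho * v $ 2 - v $ 4 \<le> - lam * max 0 (rho * z t $ 2 - z t $ 4)"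
      proof
        assume h: "rho * z t $ 2 - z t $ 4 \<ge> 0"
        have "rho * v $ 2 - v $ 4 \<le> - lam * (rho * z t $ 2 - z t $ 4)"
          by (rule KW[OF nnz nnz v2le]) (use fc h in \<open>auto simp: X_comp\<close>)
        then show "rho * v $ 2 - v $ 4 \<le> - lam * max 0 (rho * z t $ 2 - z t $ 4)" using h by simp
      qed
      show "rho * z t $ 2 - z t $ 4 \<le> 0 \<longrightarrow> 0 \<le> - lam * max 0 (rho * z t $ 2 - z t $ 4)" by simp
    qed
    have g3': "(1 - nu) * nE * z t $ 1 \<le> dM * z t $ 2" using g3 by (simp add: g3_def)
    have "v $ 1 + aa * v $ 3 + bb * Dw + ee * v $ 2 + ff * v $ 4 \<le> - cc * LL (z t)"
      unfolding LL_def
      by (rule KI4[OF nnz nnz nnz nnz g3' _ _ _ _ _ Dwb]) (use fc in \<open>auto simp: X_comp hh_def\<close>)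
    then have "RB V t S (- cc * V t)" using RB_mono[OF RBsum _ Ssub] by (simp add: V_def)
    then show "RB V t ({0..} \<inter> {t<..}) (- cc * V t)" by (simp add: S_def)
  qed
  have "\<forall>t\<in>{0..}. V t \<le> V 0 * exp (- cc * t)"
    by (rule GL[OF _ _ _ plcV nn _ cond]) (use N negligible_iff_null_sets in \<open>auto simp: is_interval_ci\<close>)
  then show ?thesis by (simp add: V_def)
qed

lemma sol_bound:
  assumes sol: "filippov_solution X Dprime z {0..}" and z0: "z 0 \<in> MM" and t: "t \<ge> 0"
  shows "mn * norm (z t) \<le> Lc * (4 * norm (z 0)) * exp (- cc * t)"
proof -
  have inv: "\<forall>t\<in>{0..}. z t \<in> MM" using invariance[OF sol _ _ z0] by simp
  have zt: "z t \<in> Dprime" using inv t by (auto simp: MM_iff)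
  have zz: "z 0 \<in> Dprime" using z0 by (auto simp: MM_iff)
  have "mn * norm (z t) \<le> mn * (z t $ 1 + z t $ 2 + z t $ 3 + z t $ 4)"
    using norm_sum(1)[OF zt] mn_pos by (intro mult_left_mono) auto
  also have "\<dots> \<le> LL (z t)" by (rule LL_low[OF zt])
  also have "\<dots> \<le> LL (z 0) * exp (- cc * t)" using decay[OF sol z0] t by auto
  also have "\<dots> \<le> (Lc * (z 0 $ 1 + z 0 $ 2 + z 0 $ 3 + z 0 $ 4)) * exp (- cc * t)"
    using LL_up[OF zz] by (intro mult_right_mono) auto
  also have "\<dots> \<le> (Lc * (4 * norm (z 0))) * exp (- cc * t)"
    using norm_sum(2)[OF zz] Lc_pos by (intro mult_right_mono mult_left_mono) auto
  finally show ?thesis .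
qed

lemma main:
  "(\<forall>z I. filippov_solution X Dprime z I \<and> 0 \<in> I \<and> I \<subseteq> {0..} \<and> z 0 \<in> MM
              \<longrightarrow> (\<forall>t\<in>I. z t \<in> MM))
     \<and> (\<forall>\<epsilon>>0. \<exists>\<delta>>0. \<forall>z. filippov_solution X Dprime z {0..} \<and> z 0 \<in> MM \<and> norm (z 0) < \<delta>
              \<longrightarrow> (\<forall>t>0. norm (z t) < \<epsilon>))
     \<and> (\<forall>z. filippov_solution X Dprime z {0..} \<and> z 0 \<in> MM \<longrightarrow> (z \<longlongrightarrow> 0) at_top)"
proof (intro conjI allI impI)
  fix z I assume "filippov_solution X Dprime z I \<and> 0 \<in> I \<and> I \<subseteq> {0..} \<and> z 0 \<in> MM"
  then show "\<forall>t\<in>I. z t \<in> MM" using invariance by blast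
next
  fix \<epsilon> :: real assume e: "\<epsilon> > 0"
  define \<delta> where "\<delta> = \<epsilon> * mn / (8 * Lc)"
  have d: "\<delta> > 0" using e mn_pos Lc_pos by (simp add: \<delta>_def)
  show "\<exists>\<delta>>0. \<forall>z. filippov_solution X Dprime z {0..} \<and> z 0 \<in> MM \<and> norm (z 0) < \<delta>
              \<longrightarrow> (\<forall>t>0. norm (z t) < \<epsilon>)"
  proof (intro exI conjI allI impI)
    show "\<delta> > 0" by (rule d)
    fix z t assume h: "filippov_solution X Dprime z {0..} \<and> z 0 \<in> MM \<and> norm (z 0) < \<delta>" and t: "(t::real) > 0"
    have b: "mn * norm (z t) \<le> Lc * (4 * norm (z 0)) * exp (- cc * t)"
      using sol_bound[of z t] h t by auto
    have "exp (- cc * t) \<le> 1" using cc_pos t by simp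
    then have "Lc * (4 * norm (z 0)) * exp (- cc * t) \<le> Lc * (4 * norm (z 0))"
      using Lc_pos by (simp add: mult_left_le)
    also have "\<dots> < Lc * (4 * \<delta>)" using h Lc_pos by simp
    also have "\<dots> = mn * (\<epsilon> / 2)" using Lc_pos by (simp add: \<delta>_def field_simps)
    finally have "mn * norm (z t) < mn * (\<epsilon> / 2)" using b by linarith
    then have "norm (z t) < \<epsilon> / 2" using mn_pos by simp
    then show "norm (z t) < \<epsilon>" using e by simp
  qed
next
  fix z assume h: "filippov_solution X Dprime z {0..} \<and> z 0 \<in> MM"
  define Kz where "Kz = Lc * (4 * norm (z 0)) / mn"
  have ev: "eventually (\<lambda>t. norm (z t) \<le> Kz * exp (- cc * t)) at_top"
    using eventually_ge_at_top[of "0::real"]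
  proof (eventually_elim)
    case (elim t)
    have "mn * norm (z t) \<le> Lc * (4 * norm (z 0)) * exp (- cc * t)" using sol_bound[of z t] h elim by auto
    then show ?case using mn_pos by (simp add: Kz_def field_simps)
  qed
  have "((\<lambda>t. Kz * exp (- cc * t)) \<longlongrightarrow> Kz * 0) at_top"
    by (intro tendsto_mult tendsto_const exp_neg_lim cc_pos)
  then have "((\<lambda>t. Kz * exp (- cc * t)) \<longlongrightarrow> 0) at_top" by simp
  then show "(z \<longlongrightarrow> 0) at_top" using Lim_null_comparison[OF ev] by blast
qed

end

theorem theorem6:
  fixes \<beta>E \<nu>E \<delta>E \<delta>M \<delta>F \<delta>s K \<nu> \<gamma>s k :: real
  assumes pos: "\<beta>E > 0" "\<nu>E > 0" "\<delta>E > 0" "\<delta>M > 0" "\<delta>F > 0" "\<delta>s > 0" "K > 0"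
    and nu: "0 < \<nu>" "\<nu> < 1"
    and gam: "0 < \<gamma>s" "\<gamma>s \<le> 1"
    and dsM: "\<delta>s \<ge> \<delta>M"
    and R0: "R0 \<beta>E \<nu>E \<delta>E \<delta>F \<nu> > 1"
    and k_lo: "(\<beta>E * \<nu> * \<nu>E - (\<nu>E + \<delta>E) * \<delta>F)
                / (\<beta>E * \<nu> * \<nu>E - (1 - \<gamma>s) * (\<nu>E + \<delta>E) * \<delta>F) * \<delta>s < k"
    and k_hi: "k < \<delta>s"
  defines "X \<equiv> closed_loop \<beta>E \<nu>E \<delta>E \<delta>M \<delta>F \<delta>s K \<nu> \<gamma>s k"
    and "MM \<equiv> Mset \<beta>E \<nu>E \<delta>E \<delta>M K \<nu> (kappa_bar \<beta>E \<nu>E \<delta>E \<delta>F \<nu> \<gamma>s)"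
  shows
    "(\<forall>z I. filippov_solution X Dprime z I \<and> 0 \<in> I \<and> I \<subseteq> {0..} \<and> z 0 \<in> MM
              \<longrightarrow> (\<forall>t\<in>I. z t \<in> MM))
     \<and> (\<forall>\<epsilon>>0. \<exists>\<delta>>0. \<forall>z. filippov_solution X Dprime z {0..} \<and> z 0 \<in> MM \<and> norm (z 0) < \<delta>
              \<longrightarrow> (\<forall>t>0. norm (z t) < \<epsilon>))
     \<and> (\<forall>z. filippov_solution X Dprime z {0..} \<and> z 0 \<in> MM \<longrightarrow> (z \<longlongrightarrow> 0) at_top)"
proof -
  interpret s: sys \<beta>E \<nu>E \<delta>E \<delta>M \<delta>F \<delta>s K \<nu> \<gamma>s k
    by unfold_locales (use pos nu gam dsM R0 k_lo k_hi in auto)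
  show ?thesis using s.main unfolding X_def MM_def s.X_def s.MM_def s.kap_def by blast
qed

end
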